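(* Let $\mathcal{A}=\mathcal{A}_n^{\bar q,\Lambda}(\mathbb{K})$ with no $q_k$ a root of unity, and put $z_0=1$. Fix $1\le i\le n$. Suppose $a,b\in\mathcal{A}\setminus\mathbb{K}$ satisfy $ab=\alpha_0z_0+\sum_{j=1}^n\alpha_jz_j$ with $\alpha_0,\dots,\alpha_n\in\mathbb{K}$ and $\alpha_i\neq0$. Then there exist $\lambda,\mu\in\mathbb{K}^*$ such that either $a=\lambda y_i,\ b=\mu x_i$, or $a=\lambda x_i,\ b=\mu y_i$.
   Context: Let $\mathbb{K}$ be a field, $n\ge 1$, $\bar q=(q_1,\dots,q_n)\in(\mathbb{K}^* )^n$, and $\Lambda=(\lambda_{ij})$ an $n\times n$ matrix over $\mathbb{K}^*$ with $\lambda_{ij}=\lambda_{ji}^{-1}$, $\lambda_{ii}=1$. $\mathcal{A}_n^{\bar q,\Lambda}(\mathbb{K})$ is the $\mathbb{K}$-algebra generated by $x_1,y_1,\dots,x_n,y_n$ with relations: for $1\le i<j\le n$, $x_ix_j=\lambda_{ij}x_jx_i$, $y_jy_i=\lambda_{ji}y_iy_j$, $x_iy_j=\lambda_{ji}y_jx_i$, $x_jy_i=\lambda_{ij}y_ix_j$; and $x_iy_i-q_iy_ix_i=1$ for all $i$. Put $z_i=x_iy_i-y_ix_i$ for $i=1,\dots,n$. *)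

theory Defs
  imports Main
begin

text \<open>The free associative K-algebra on letters x_k, y_k, realised as functions
  from words to K (elements of interest are finitely supported), and the
  quantum generalized Weyl algebra A_n^{q,Lambda}(K) as its quotient by the
  two-sided ideal generated by the defining relations.\<close>

datatype gen = X nat | Y nat

fun gidx :: "gen \<Rightarrow> nat" where
  "gidx (X k) = k" | "gidx (Y k) = k"

type_synonym 'k ncpoly = "gen list \<Rightarrow> 'k"

definition ncmono :: "gen list \<Rightarrow> 'k::zero \<Rightarrow> 'k ncpoly" where
  "ncmono w c = (\<lambda>u. if u = w then c else 0)"

definition ncconst :: "'k::zero \<Rightarrow> 'k ncpoly" where
  "ncconst c = ncmono [] c"

definition ncgen :: "gen \<Rightarrow> 'k::{zero,one} ncpoly" where
  "ncgen g = ncmono [g] 1"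

definition ncadd :: "'k::plus ncpoly \<Rightarrow> 'k ncpoly \<Rightarrow> 'k ncpoly" where
  "ncadd f g = (\<lambda>u. f u + g u)"

definition ncsub :: "'k::minus ncpoly \<Rightarrow> 'k ncpoly \<Rightarrow> 'k ncpoly" where
  "ncsub f g = (\<lambda>u. f u - g u)"

definition ncsmult :: "'k::times \<Rightarrow> 'k ncpoly \<Rightarrow> 'k ncpoly" where
  "ncsmult c f = (\<lambda>u. c * f u)"

definition ncmul :: "'k::comm_semiring_1 ncpoly \<Rightarrow> 'k ncpoly \<Rightarrow> 'k ncpoly" where
  "ncmul f g = (\<lambda>u. \<Sum>k\<le>length u. f (take k u) * g (drop k u))"

definition free_elem :: "nat \<Rightarrow> 'k::zero ncpoly \<Rightarrow> bool" where
  "free_elem n f \<longleftrightarrow> finite {u. f u \<noteq> 0} \<and>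
     (\<forall>u. f u \<noteq> 0 \<longrightarrow> (\<forall>g\<in>set u. gidx g \<in> {1..n}))"

definition w2 :: "gen \<Rightarrow> gen \<Rightarrow> 'k::{zero,one} ncpoly" where
  "w2 g h = ncmono [g, h] 1"

definition weyl_rels :: "nat \<Rightarrow> (nat \<Rightarrow> 'k::comm_ring_1) \<Rightarrow> (nat \<Rightarrow> nat \<Rightarrow> 'k) \<Rightarrow> 'k ncpoly set" where
  "weyl_rels n q L =
     {ncsub (w2 (X i) (X j)) (ncsmult (L i j) (w2 (X j) (X i))) | i j. 1 \<le> i \<and> i < j \<and> j \<le> n}
   \<union> {ncsub (w2 (Y j) (Y i)) (ncsmult (L j i) (w2 (Y i) (Y j))) | i j. 1 \<le> i \<and> i < j \<and> j \<le> n}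
   \<union> {ncsub (w2 (X i) (Y j)) (ncsmult (L j i) (w2 (Y j) (X i))) | i j. 1 \<le> i \<and> i < j \<and> j \<le> n}
   \<union> {ncsub (w2 (X j) (Y i)) (ncsmult (L i j) (w2 (Y i) (X j))) | i j. 1 \<le> i \<and> i < j \<and> j \<le> n}
   \<union> {ncsub (ncsub (w2 (X i) (Y i)) (ncsmult (q i) (w2 (Y i) (X i)))) (ncconst 1) | i. 1 \<le> i \<and> i \<le> n}"

inductive_set nc_ideal :: "'k::comm_ring_1 ncpoly set \<Rightarrow> 'k ncpoly set" for R where
  zero: "(\<lambda>u. 0) \<in> nc_ideal R"
| gen: "r \<in> R \<Longrightarrow> r \<in> nc_ideal R"
| add: "p \<in> nc_ideal R \<Longrightarrow> p' \<in> nc_ideal R \<Longrightarrow> ncadd p p' \<in> nc_ideal R"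
| smult: "p \<in> nc_ideal R \<Longrightarrow> ncsmult c p \<in> nc_ideal R"
| mult: "p \<in> nc_ideal R \<Longrightarrow> ncmul (ncmono v 1) (ncmul p (ncmono w 1)) \<in> nc_ideal R"

definition weyl_eq :: "nat \<Rightarrow> (nat \<Rightarrow> 'k::comm_ring_1) \<Rightarrow> (nat \<Rightarrow> nat \<Rightarrow> 'k) \<Rightarrow> 'k ncpoly \<Rightarrow> 'k ncpoly \<Rightarrow> bool" where
  "weyl_eq n q L a b \<longleftrightarrow> ncsub a b \<in> nc_ideal (weyl_rels n q L)"

definition weyl_in_K :: "nat \<Rightarrow> (nat \<Rightarrow> 'k::comm_ring_1) \<Rightarrow> (nat \<Rightarrow> nat \<Rightarrow> 'k) \<Rightarrow> 'k ncpoly \<Rightarrow> bool" where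
  "weyl_in_K n q L a \<longleftrightarrow> (\<exists>c. weyl_eq n q L a (ncconst c))"

definition weyl_z :: "nat \<Rightarrow> 'k::comm_ring_1 ncpoly" where
  "weyl_z i = (if i = 0 then ncconst 1 else ncsub (w2 (X i) (Y i)) (w2 (Y i) (X i)))"

end

theory Submission
  imports Defs "HOL-Library.Function_Algebras" "HOL-Library.Multiset"
begin


definition chi :: "(nat \<Rightarrow> 'k::field) \<Rightarrow> nat set \<Rightarrow> (nat \<Rightarrow> nat) \<Rightarrow> (nat \<Rightarrow> int) \<Rightarrow> 'k" where
  "chi c S \<phi> m = (\<Prod>l\<in>S. c l powi m (\<phi> l))"

definition eY :: "nat \<Rightarrow> nat \<Rightarrow> int" where "eY j = (\<lambda>k. if k = 2*j then 1 else 0)"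
definition eX :: "nat \<Rightarrow> nat \<Rightarrow> int" where "eX j = (\<lambda>k. if k = 2*j+1 then 1 else 0)"

lemma chi_add: "finite S \<Longrightarrow> \<forall>l\<in>S. c l \<noteq> 0 \<Longrightarrow> chi c S \<phi> (m + e) = chi c S \<phi> m * chi c S \<phi> e"
  by (simp add: chi_def power_int_add prod.distrib[symmetric])

lemma chi_nz: "finite S \<Longrightarrow> \<forall>l\<in>S. c l \<noteq> 0 \<Longrightarrow> chi c S \<phi> m \<noteq> 0"
  by (simp add: chi_def)

lemma chi_uminus: "chi c S \<phi> (- e) = inverse (chi c S \<phi> e)"
  using prod_inversef[of "\<lambda>l. c l powi e (\<phi> l)" S] by (simp add: chi_def power_int_minus o_def)

lemma chi_diff: "finite S \<Longrightarrow> \<forall>l\<in>S. c l \<noteq> 0 \<Longrightarrow> chi c S \<phi> (m - e) = chi c S \<phi> m / chi c S \<phi> e"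
proof -
  assume a: "finite S" "\<forall>l\<in>S. c l \<noteq> 0"
  have "m - e = m + (- e)" by simp
  then show ?thesis using chi_add[OF a, of \<phi> m "-e"] by (simp add: chi_uminus field_simps)
qed

lemma chi_mult: "chi c S \<phi> m * chi d S \<phi> m = chi (\<lambda>l. c l * d l) S \<phi> m"
  by (simp add: chi_def power_int_mult_distrib prod.distrib)

lemma chi_one: "\<forall>l\<in>S. c l = 1 \<Longrightarrow> chi c S \<phi> m = 1"
  by (simp add: chi_def)

lemma chi_zero: "\<forall>l\<in>S. m (\<phi> l) = 0 \<Longrightarrow> chi c S \<phi> m = 1"
  by (simp add: chi_def)

lemma chi_eY_ev: "finite S \<Longrightarrow> chi c S (\<lambda>k. 2*k) (eY i) = (if i \<in> S then c i else 1)"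
proof -
  assume "finite S"
  have "chi c S (\<lambda>k. 2*k) (eY i) = (\<Prod>l\<in>S. if l = i then c l else 1)"
    unfolding chi_def eY_def by (rule prod.cong) auto
  then show ?thesis using \<open>finite S\<close> by (simp add: prod.delta)
qed

lemma chi_eX_od: "finite S \<Longrightarrow> chi c S (\<lambda>k. Suc (2*k)) (eX i) = (if i \<in> S then c i else 1)"
proof -
  assume "finite S"
  have "chi c S (\<lambda>k. Suc (2*k)) (eX i) = (\<Prod>l\<in>S. if l = i then c l else 1)"
    unfolding chi_def eX_def by (rule prod.cong) auto
  then show ?thesis using \<open>finite S\<close> by (simp add: prod.delta)
qed

lemma chi_eX_ev: "chi c S (\<lambda>k. 2*k) (eX i) = 1"
proof -
  have "\<And>x. (2*x = 2*i+1) = False" by presburger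
  then show ?thesis unfolding chi_def eX_def by simp
qed

lemma chi_eY_od: "chi c S (\<lambda>k. Suc (2*k)) (eY i) = 1"
proof -
  have "\<And>x. (2*x+1 = 2*i) = False" by presburger
  then show ?thesis unfolding chi_def eY_def by simp
qed

lemma ev_ne_od[simp]: "2*a \<noteq> Suc (2*b)" "Suc (2*b) \<noteq> 2*a" by presburger+

lemma eY_app[simp]: "eY j k = (if k = 2*j then 1 else 0)" by (simp add: eY_def)
lemma eX_app[simp]: "eX j k = (if k = 2*j+1 then 1 else 0)" by (simp add: eX_def)

locale qw =
  fixes n :: nat and q :: "nat \<Rightarrow> 'k::field" and L :: "nat \<Rightarrow> nat \<Rightarrow> 'k"
  assumes q_nz: "\<forall>k\<in>{1..n}. q k \<noteq> 0"
    and q_ne1: "\<forall>k\<in>{1..n}. q k \<noteq> 1"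
    and L_nz: "\<forall>k\<in>{1..n}. \<forall>l\<in>{1..n}. L k l \<noteq> 0"
    and L_inv: "\<forall>k\<in>{1..n}. \<forall>l\<in>{1..n}. L k l * L l k = 1"
begin

definition PY :: "nat \<Rightarrow> (nat \<Rightarrow> int) \<Rightarrow> 'k" where
  "PY j m = chi (\<lambda>k. L j k) {1..<j} (\<lambda>k. 2*k) m"
definition PX1 :: "nat \<Rightarrow> (nat \<Rightarrow> int) \<Rightarrow> 'k" where
  "PX1 j m = chi (\<lambda>k. L k j) {1..<j} (\<lambda>k. 2*k) m"
definition PX2 :: "nat \<Rightarrow> (nat \<Rightarrow> int) \<Rightarrow> 'k" where
  "PX2 j m = chi (\<lambda>k. L k j) {1..<j} (\<lambda>k. 2*k) m * q j powi m (2*j)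
     * chi (\<lambda>k. L k j) {j<..n} (\<lambda>k. 2*k) m * chi (\<lambda>k. L j k) {1..<j} (\<lambda>k. Suc (2*k)) m"
definition qint :: "nat \<Rightarrow> int \<Rightarrow> 'k" where
  "qint j a = (q j powi a - 1) / (q j - 1)"

definition TY :: "nat \<Rightarrow> ((nat \<Rightarrow> int) \<Rightarrow> 'k) \<Rightarrow> ((nat \<Rightarrow> int) \<Rightarrow> 'k)" where
  "TY j F = (\<lambda>m. PY j m * F (m - eY j))"
definition TX :: "nat \<Rightarrow> ((nat \<Rightarrow> int) \<Rightarrow> 'k) \<Rightarrow> ((nat \<Rightarrow> int) \<Rightarrow> 'k)" where
  "TX j F = (\<lambda>m. PX1 j m * qint j (m (2*j) + 1) * F (m + eY j) + PX2 j m * F (m - eX j))"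

lemma Lnz': "j \<le> n \<Longrightarrow> \<forall>l\<in>{1..<j}. L j l \<noteq> 0" "j \<le> n \<Longrightarrow> 1 \<le> j \<Longrightarrow> \<forall>l\<in>{1..<j}. L l j \<noteq> 0"
  "1 \<le> j \<Longrightarrow> \<forall>l\<in>{j<..n}. L l j \<noteq> 0"
  using L_nz by auto

lemma PY_add: "j \<le> n \<Longrightarrow> PY j (m + e) = PY j m * PY j e"
  unfolding PY_def using Lnz' by (intro chi_add) auto
lemma PY_diff: "j \<le> n \<Longrightarrow> PY j (m - e) = PY j m / PY j e"
  unfolding PY_def using Lnz' by (intro chi_diff) auto
lemma PY_nz: "j \<le> n \<Longrightarrow> PY j m \<noteq> 0"
  unfolding PY_def using Lnz' by (intro chi_nz) auto
lemma PY_eY: "PY j (eY i) = (if 1 \<le> i \<and> i < j then L j i else 1)"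
  unfolding PY_def by (simp add: chi_eY_ev)
lemma PY_eX: "PY j (eX i) = 1"
  unfolding PY_def by (simp add: chi_eX_ev)

lemma PX1_add: "1 \<le> j \<Longrightarrow> j \<le> n \<Longrightarrow> PX1 j (m + e) = PX1 j m * PX1 j e"
  unfolding PX1_def using Lnz' by (intro chi_add) auto
lemma PX1_diff: "1 \<le> j \<Longrightarrow> j \<le> n \<Longrightarrow> PX1 j (m - e) = PX1 j m / PX1 j e"
  unfolding PX1_def using Lnz' by (intro chi_diff) auto
lemma PX1_nz: "1 \<le> j \<Longrightarrow> j \<le> n \<Longrightarrow> PX1 j m \<noteq> 0"
  unfolding PX1_def using Lnz' by (intro chi_nz) auto
lemma PX1_eY: "PX1 j (eY i) = (if 1 \<le> i \<and> i < j then L i j else 1)"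
  unfolding PX1_def by (simp add: chi_eY_ev)
lemma PX1_eX: "PX1 j (eX i) = 1"
  unfolding PX1_def by (simp add: chi_eX_ev)

lemma PX2_add: "1 \<le> j \<Longrightarrow> j \<le> n \<Longrightarrow> PX2 j (m + e) = PX2 j m * PX2 j e"
proof -
  assume j: "1 \<le> j" "j \<le> n"
  have qj: "q j \<noteq> 0" using q_nz j by auto
  note l1 = Lnz'(2)[OF j(2) j(1)] and l2 = Lnz'(3)[OF j(1)] and l3 = Lnz'(1)[OF j(2)]
  show ?thesis unfolding PX2_def
    by (simp add: chi_add l1 l2 l3 power_int_add qj)
qed
lemma PX2_nz: "1 \<le> j \<Longrightarrow> j \<le> n \<Longrightarrow> PX2 j m \<noteq> 0"
proof -
  assume j: "1 \<le> j" "j \<le> n"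
  have qj: "q j \<noteq> 0" using q_nz j by auto
  note l1 = Lnz'(2)[OF j(2) j(1)] and l2 = Lnz'(3)[OF j(1)] and l3 = Lnz'(1)[OF j(2)]
  show ?thesis unfolding PX2_def using qj by (simp add: chi_nz l1 l2 l3)
qed
lemma PX2_diff: "1 \<le> j \<Longrightarrow> j \<le> n \<Longrightarrow> PX2 j (m - e) = PX2 j m / PX2 j e"
proof -
  assume j: "1 \<le> j" "j \<le> n"
  have "PX2 j m = PX2 j ((m - e) + e)" by simp
  also have "\<dots> = PX2 j (m - e) * PX2 j e" using PX2_add j by blast
  finally show ?thesis using PX2_nz[OF j] by (simp add: field_simps)
qed
lemma PX2_eY: "1 \<le> j \<Longrightarrow> PX2 j (eY i) = (if 1 \<le> i \<and> i < j then L i j else 1) *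
   (if i = j then q j else 1) * (if j < i \<and> i \<le> n then L i j else 1)"
  unfolding PX2_def by (simp add: chi_eY_ev chi_eY_od)
lemma PX2_eX: "PX2 j (eX i) = (if 1 \<le> i \<and> i < j then L j i else 1)"
  unfolding PX2_def by (auto simp add: chi_eX_ev chi_eX_od)


lemma qint_rec: "1 \<le> j \<Longrightarrow> j \<le> n \<Longrightarrow> qint j (a + 1) = q j * qint j a + 1"
proof -
  assume j: "1 \<le> j" "j \<le> n"
  have "q j \<noteq> 0" "q j - 1 \<noteq> 0" using q_nz q_ne1 j by auto
  then show ?thesis unfolding qint_def by (simp add: power_int_add field_simps)
qed

lemma R2: "1 \<le> i \<Longrightarrow> i < j \<Longrightarrow> j \<le> n \<Longrightarrow> TY j (TY i F) m = L j i * TY i (TY j F) m"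
proof -
  assume ij: "1 \<le> i" "i < j" "j \<le> n"
  have v: "m - eY j - eY i = m - eY i - eY j" by (simp add: algebra_simps)
  have "L j i * L i j = 1" "L j i \<noteq> 0" using L_inv L_nz ij by auto
  then show ?thesis using ij unfolding TY_def
    by (simp add: PY_diff PY_eY PY_nz v field_simps)
qed


lemma R1: "1 \<le> i \<Longrightarrow> i < j \<Longrightarrow> j \<le> n \<Longrightarrow> TX i (TX j F) m = L i j * TX j (TX i F) m"
proof -
  assume ij: "1 \<le> i" "i < j" "j \<le> n"
  have ne: "i \<noteq> j" "j \<noteq> i" using ij by auto
  have i1: "1 \<le> j" "i \<le> n" using ij by auto
  have v: "m + eY i + eY j = m + eY j + eY i" "m + eY i - eX j = m - eX j + eY i"
     "m - eX i + eY j = m + eY j - eX i" "m - eX i - eX j = m - eX j - eX i" by (simp_all add: algebra_simps)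
  have l: "L j i * L i j = 1" "L j i \<noteq> 0" "L i j \<noteq> 0" using L_inv L_nz ij by auto
  define A where "A k m = PX1 k m * qint k (m (2*k) + 1)" for k m
  define B where "B k m = PX2 k m" for k m
  have TXe: "TX k G m = A k m * G (m + eY k) + B k m * G (m - eX k)" for k G m
    unfolding TX_def A_def B_def by simp
  have A1: "A j (m + eY i) = L i j * A j m" "A j (m - eX i) = A j m"
      "A i (m + eY j) = A i m" "A i (m - eX j) = A i m"
    unfolding A_def using ij ne i1 by (simp_all add: PX1_add PX1_diff PX1_eY PX1_eX PX1_nz)
  have B1: "B j (m + eY i) = L i j * B j m" "B j (m - eX i) = B j m / L j i"
      "B i (m + eY j) = L j i * B i m" "B i (m - eX j) = B i m"
    unfolding B_def using ij ne i1 by (simp_all add: PX2_add PX2_diff PX2_eY PX2_eX PX2_nz)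
  have lhs: "TX i (TX j F) m = A i m * (A j (m + eY i) * F (m + eY i + eY j) + B j (m + eY i) * F (m + eY i - eX j))
     + B i m * (A j (m - eX i) * F (m - eX i + eY j) + B j (m - eX i) * F (m - eX i - eX j))"
    unfolding TXe by simp
  have rhs: "TX j (TX i F) m = A j m * (A i (m + eY j) * F (m + eY j + eY i) + B i (m + eY j) * F (m + eY j - eX i))
     + B j m * (A i (m - eX j) * F (m - eX j + eY i) + B i (m - eX j) * F (m - eX j - eX i))"
    unfolding TXe by simp
  have lij: "L i j = 1 / L j i" using l by (simp add: field_simps)
  show ?thesis unfolding lhs rhs A1 B1 v lij using l
    by (simp add: field_simps)
qed

lemma TXe: "TX k G m = (PX1 k m * qint k (m (2*k) + 1)) * G (m + eY k) + PX2 k m * G (m - eX k)"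
  unfolding TX_def by simp

lemma R3: "1 \<le> i \<Longrightarrow> i < j \<Longrightarrow> j \<le> n \<Longrightarrow> TX i (TY j F) m = L j i * TY j (TX i F) m"
proof -
  assume ij: "1 \<le> i" "i < j" "j \<le> n"
  have ne: "i \<noteq> j" "j \<noteq> i" using ij by auto
  have i1: "1 \<le> j" "i \<le> n" using ij by auto
  have v: "m + eY i - eY j = m - eY j + eY i" "m - eX i - eY j = m - eY j - eX i" by (simp_all add: algebra_simps)
  have l: "L j i * L i j = 1" "L j i \<noteq> 0" "L i j \<noteq> 0" using L_inv L_nz ij by auto
  have lij: "L i j = 1 / L j i" using l by (simp add: field_simps)
  have P: "PY j (m + eY i) = PY j m * L j i" "PY j (m - eX i) = PY j m"
     "PX1 i (m - eY j) = PX1 i m" "PX2 i (m - eY j) = PX2 i m / L j i"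
    using ij ne i1 by (simp_all add: PY_add PY_diff PY_eY PY_eX PX1_diff PX1_eY PX2_diff PX2_eY)
  have lhs: "TX i (TY j F) m = (PX1 i m * qint i (m (2*i) + 1)) * (PY j (m + eY i) * F (m + eY i - eY j))
     + PX2 i m * (PY j (m - eX i) * F (m - eX i - eY j))"
    unfolding TXe TY_def by simp
  have rhs: "TY j (TX i F) m = PY j m * ((PX1 i (m - eY j) * qint i ((m - eY j) (2*i) + 1)) * F (m - eY j + eY i)
     + PX2 i (m - eY j) * F (m - eY j - eX i))"
    unfolding TXe TY_def by simp
  show ?thesis unfolding lhs rhs P v using l ne
    by (simp add: field_simps)
qed

lemma R4: "1 \<le> i \<Longrightarrow> i < j \<Longrightarrow> j \<le> n \<Longrightarrow> TX j (TY i F) m = L i j * TY i (TX j F) m"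
proof -
  assume ij: "1 \<le> i" "i < j" "j \<le> n"
  have ne: "i \<noteq> j" "j \<noteq> i" using ij by auto
  have i1: "1 \<le> j" "i \<le> n" using ij by auto
  have v: "m + eY j - eY i = m - eY i + eY j" "m - eX j - eY i = m - eY i - eX j" by (simp_all add: algebra_simps)
  have l: "L j i * L i j = 1" "L j i \<noteq> 0" "L i j \<noteq> 0" using L_inv L_nz ij by auto
  have P: "PY i (m + eY j) = PY i m" "PY i (m - eX j) = PY i m"
     "PX1 j (m - eY i) = PX1 j m / L i j" "PX2 j (m - eY i) = PX2 j m / L i j"
    using ij ne i1 by (simp_all add: PY_add PY_diff PY_eY PY_eX PX1_diff PX1_eY PX2_diff PX2_eY)
  have lhs: "TX j (TY i F) m = (PX1 j m * qint j (m (2*j) + 1)) * (PY i (m + eY j) * F (m + eY j - eY i))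
     + PX2 j m * (PY i (m - eX j) * F (m - eX j - eY i))"
    unfolding TXe TY_def by simp
  have rhs: "TY i (TX j F) m = PY i m * ((PX1 j (m - eY i) * qint j ((m - eY i) (2*j) + 1)) * F (m - eY i + eY j)
     + PX2 j (m - eY i) * F (m - eY i - eX j))"
    unfolding TXe TY_def by simp
  show ?thesis unfolding lhs rhs P v using l ne
    by (simp add: field_simps)
qed

lemma PYPX1: "1 \<le> j \<Longrightarrow> j \<le> n \<Longrightarrow> PY j m * PX1 j m = 1"
  unfolding PY_def PX1_def chi_mult using L_inv by (intro chi_one) auto

lemma R5: "1 \<le> j \<Longrightarrow> j \<le> n \<Longrightarrow> TX j (TY j F) m = q j * TY j (TX j F) m + F m"
proof -
  assume j: "1 \<le> j" "j \<le> n"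
  have v: "m - eX j - eY j = m - eY j - eX j" by (simp_all add: algebra_simps)
  have qr: "qint j (m (2*j) + 1) = q j * qint j (m (2*j)) + 1" using qint_rec j by blast
  have qj: "q j \<noteq> 0" using q_nz j by auto
  have P: "PY j (m + eY j) = PY j m" "PY j (m - eX j) = PY j m"
     "PX1 j (m - eY j) = PX1 j m" "PX2 j (m - eY j) = PX2 j m / q j"
    using j by (simp_all add: PY_add PY_diff PY_eY PY_eX PX1_diff PX1_eY PX2_diff PX2_eY)
  have lhs: "TX j (TY j F) m = (PX1 j m * qint j (m (2*j) + 1)) * (PY j (m + eY j) * F (m + eY j - eY j))
     + PX2 j m * (PY j (m - eX j) * F (m - eX j - eY j))"
    unfolding TXe TY_def by simp
  have rhs: "TY j (TX j F) m = PY j m * ((PX1 j (m - eY j) * qint j ((m - eY j) (2*j) + 1)) * F (m - eY j + eY j)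
     + PX2 j (m - eY j) * F (m - eY j - eX j))"
    unfolding TXe TY_def by simp
  have pp: "PY j m * PX1 j m = 1" using PYPX1 j by blast
  show ?thesis unfolding lhs rhs P v qr using qj pp
    by (simp add: field_simps)
qed

end


definition supp :: "('a \<Rightarrow> 'k::zero) \<Rightarrow> 'a set" where "supp f = {u. f u \<noteq> 0}"

lemma ncmul_mono_left: "ncmul (ncmono v c) g u = (if take (length v) u = v then c * g (drop (length v) u) else 0)"
proof -
  have "ncmul (ncmono v c) g u = (\<Sum>k\<le>length u. if k = length v then (if take (length v) u = v then c * g (drop k u) else 0) else 0)"
    unfolding ncmul_def ncmono_def
  proof (rule sum.cong)
    fix k assume k: "k \<in> {..length u}"
    show "(if take k u = v then c else 0) * g (drop k u) = (if k = length v then (if take (length v) u = v then c * g (drop k u) else 0) else 0)"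
    proof (cases "take k u = v")
      case True
      then have "length v = k" using k by auto
      then show ?thesis using True by simp
    next
      case False then show ?thesis by auto
    qed
  qed simp
  also have "\<dots> = (if length v \<le> length u then (if take (length v) u = v then c * g (drop (length v) u) else 0) else 0)"
    by (simp add: sum.delta')
  also have "\<dots> = (if take (length v) u = v then c * g (drop (length v) u) else 0)"
    by (auto dest: arg_cong[where f=length])
  finally show ?thesis .
qed

lemma ncmul_mono_right: "ncmul f (ncmono w c) u =
   (if length w \<le> length u \<and> drop (length u - length w) u = w then f (take (length u - length w) u) * c else 0)"
proof -
  have "ncmul f (ncmono w c) u = (\<Sum>k\<le>length u. if k = length u - length w then
        (if length w \<le> length u \<and> drop (length u - length w) u = w then f (take k u) * c else 0) else 0)"
    unfolding ncmul_def ncmono_def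
  proof (rule sum.cong)
    fix k assume k: "k \<in> {..length u}"
    show "f (take k u) * (if drop k u = w then c else 0) = (if k = length u - length w then
        (if length w \<le> length u \<and> drop (length u - length w) u = w then f (take k u) * c else 0) else 0)"
    proof (cases "drop k u = w")
      case True
      then have "length w = length u - k" by auto
      then show ?thesis using True k by auto
    next
      case False then show ?thesis by auto
    qed
  qed simp
  also have "\<dots> = (if length w \<le> length u \<and> drop (length u - length w) u = w then f (take (length u - length w) u) * c else 0)"
    by (simp add: sum.delta')
  finally show ?thesis .
qed

context qw begin

definition Top :: "gen \<Rightarrow> ((nat \<Rightarrow> int) \<Rightarrow> 'k) \<Rightarrow> ((nat \<Rightarrow> int) \<Rightarrow> 'k)" where
  "Top g = (case g of Y j \<Rightarrow> TY j | X j \<Rightarrow> TX j)"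

primrec opw :: "gen list \<Rightarrow> ((nat \<Rightarrow> int) \<Rightarrow> 'k) \<Rightarrow> ((nat \<Rightarrow> int) \<Rightarrow> 'k)" where
  "opw [] F = F"
| "opw (g # w) F = Top g (opw w F)"

definition rho :: "'k ncpoly \<Rightarrow> ((nat \<Rightarrow> int) \<Rightarrow> 'k) \<Rightarrow> ((nat \<Rightarrow> int) \<Rightarrow> 'k)" where
  "rho f F m = (\<Sum>u\<in>supp f. f u * opw u F m)"

lemma opw_append: "opw (v @ w) F = opw v (opw w F)"
  by (induction v) auto

lemma Top_sum: "Top g (\<lambda>m. \<Sum>s\<in>S. c s * G s m) m = (\<Sum>s\<in>S. c s * Top g (G s) m)"
  by (cases g) (simp_all add: Top_def TY_def TX_def sum_distrib_left sum.distrib algebra_simps)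

lemma opw_sum: "opw w (\<lambda>m. \<Sum>s\<in>S. c s * G s m) m = (\<Sum>s\<in>S. c s * opw w (G s) m)"
proof (induction w arbitrary: m)
  case Nil then show ?case by simp
next
  case (Cons g w)
  have "opw w (\<lambda>m. \<Sum>s\<in>S. c s * G s m) = (\<lambda>m. \<Sum>s\<in>S. c s * opw w (G s) m)"
    using Cons by auto
  then show ?case by (simp add: Top_sum)
qed

lemma opw_zero: "opw w (\<lambda>m. 0) m = 0"
  using opw_sum[where w=w and S="{}" and m=m] by simp

lemma rho_superset: "finite S \<Longrightarrow> supp f \<subseteq> S \<Longrightarrow> rho f F m = (\<Sum>u\<in>S. f u * opw u F m)"
  unfolding rho_def by (rule sum.mono_neutral_left) (auto simp: supp_def)

lemma rho_reindex:
  assumes "finite (supp p)" "inj \<phi>" "\<And>s. h (\<phi> s) = p s" "\<And>u. h u \<noteq> 0 \<Longrightarrow> u \<in> range \<phi>"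
  shows "rho h F m = (\<Sum>s\<in>supp p. p s * opw (\<phi> s) F m)" "supp h = \<phi> ` supp p"
proof -
  show sh: "supp h = \<phi> ` supp p"
  proof
    show "supp h \<subseteq> \<phi> ` supp p"
    proof
      fix x assume "x \<in> supp h"
      then have hx: "h x \<noteq> 0" by (simp add: supp_def)
      then obtain s where "x = \<phi> s" using assms(4) by blast
      then show "x \<in> \<phi> ` supp p" using hx assms(3) by (auto simp: supp_def)
    qed
  qed (use assms(3) in \<open>auto simp: supp_def\<close>)
  have "rho h F m = (\<Sum>u\<in>\<phi> ` supp p. h u * opw u F m)" unfolding rho_def sh ..
  also have "\<dots> = (\<Sum>s\<in>supp p. h (\<phi> s) * opw (\<phi> s) F m)"
    by (rule sum.reindex[unfolded o_def]) (meson assms(2) inj_on_subset subset_UNIV)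
  finally show "rho h F m = (\<Sum>s\<in>supp p. p s * opw (\<phi> s) F m)" using assms(3) by simp
qed

lemma rho_lshift:
  assumes "finite (supp p)"
  shows "rho (ncmul (ncmono v 1) p) F m = opw v (rho p F) m" "supp (ncmul (ncmono v 1) p) = (\<lambda>s. v @ s) ` supp p"
proof -
  have h1: "ncmul (ncmono v 1) p (v @ s) = p s" for s by (simp add: ncmul_mono_left)
  have h2: "u \<in> range (\<lambda>s. v @ s)" if "ncmul (ncmono v 1) p u \<noteq> 0" for u
  proof -
    have "take (length v) u = v" using that by (simp add: ncmul_mono_left split: if_splits)
    then have "u = v @ drop (length v) u" by (metis append_take_drop_id)
    then show ?thesis by blast
  qed
  note r = rho_reindex[OF assms, of "\<lambda>s. v @ s", OF _ h1 h2]
  show "supp (ncmul (ncmono v 1) p) = (\<lambda>s. v @ s) ` supp p" using r(2) by (simp add: inj_def)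
  have "rho (ncmul (ncmono v 1) p) F m = (\<Sum>s\<in>supp p. p s * opw v (opw s F) m)"
    using r(1) by (simp add: inj_def opw_append)
  also have "\<dots> = opw v (\<lambda>m. \<Sum>s\<in>supp p. p s * opw s F m) m" by (simp add: opw_sum)
  finally show "rho (ncmul (ncmono v 1) p) F m = opw v (rho p F) m" unfolding rho_def[abs_def] by simp
qed

lemma rho_rshift:
  assumes "finite (supp p)"
  shows "rho (ncmul p (ncmono w 1)) F m = rho p (opw w F) m" "supp (ncmul p (ncmono w 1)) = (\<lambda>s. s @ w) ` supp p"
proof -
  have h1: "ncmul p (ncmono w 1) (s @ w) = p s" for s by (simp add: ncmul_mono_right)
  have h2: "u \<in> range (\<lambda>s. s @ w)" if "ncmul p (ncmono w 1) u \<noteq> 0" for u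
  proof -
    have "drop (length u - length w) u = w" using that by (simp add: ncmul_mono_right split: if_splits)
    then have "u = take (length u - length w) u @ w" by (metis append_take_drop_id)
    then show ?thesis by blast
  qed
  note r = rho_reindex[OF assms, of "\<lambda>s. s @ w", OF _ h1 h2]
  show "supp (ncmul p (ncmono w 1)) = (\<lambda>s. s @ w) ` supp p" using r(2) by (simp add: inj_def)
  show "rho (ncmul p (ncmono w 1)) F m = rho p (opw w F) m"
    using r(1) by (simp add: inj_def opw_append rho_def)
qed

lemma supp_ncadd: "supp (ncadd (p::'k ncpoly) p') \<subseteq> supp p \<union> supp p'" by (auto simp: supp_def ncadd_def)
lemma supp_ncsub: "supp (ncsub (p::'k ncpoly) p') \<subseteq> supp p \<union> supp p'" by (auto simp: supp_def ncsub_def)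
lemma supp_ncsmult: "supp (ncsmult c (p::'k ncpoly)) \<subseteq> supp p" by (auto simp: supp_def ncsmult_def)

lemma rho_ncadd: "finite (supp p) \<Longrightarrow> finite (supp p') \<Longrightarrow> rho (ncadd p p') F m = rho p F m + rho p' F m"
  using rho_superset[of "supp p \<union> supp p'" "ncadd p p'"] rho_superset[of "supp p \<union> supp p'" p]
     rho_superset[of "supp p \<union> supp p'" p'] supp_ncadd[of p p']
  by (simp add: ncadd_def algebra_simps sum.distrib)

lemma rho_ncsub: "finite (supp p) \<Longrightarrow> finite (supp p') \<Longrightarrow> rho (ncsub p p') F m = rho p F m - rho p' F m"
  using rho_superset[of "supp p \<union> supp p'" "ncsub p p'"] rho_superset[of "supp p \<union> supp p'" p]
     rho_superset[of "supp p \<union> supp p'" p'] supp_ncsub[of p p']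
  by (simp add: ncsub_def algebra_simps sum_subtractf)

lemma rho_ncsmult: "finite (supp p) \<Longrightarrow> rho (ncsmult c p) F m = c * rho p F m"
  using rho_superset[of "supp p" "ncsmult c p"] supp_ncsmult[of c p]
  by (simp add: ncsmult_def rho_def sum_distrib_left algebra_simps)

lemma rho_lincomb: "finite J \<Longrightarrow> \<forall>j\<in>J. finite (supp (h j)) \<Longrightarrow>
   rho (\<lambda>u. \<Sum>j\<in>J. c j * h j u) F m = (\<Sum>j\<in>J. c j * rho (h j) F m)"
proof -
  assume J: "finite J" "\<forall>j\<in>J. finite (supp (h j))"
  let ?S = "\<Union>j\<in>J. supp (h j)"
  have fS: "finite ?S" using J by auto
  have ss: "supp (\<lambda>u. \<Sum>j\<in>J. c j * h j u) \<subseteq> ?S"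
    by (auto simp: supp_def intro: ccontr)
  have "rho (\<lambda>u. \<Sum>j\<in>J. c j * h j u) F m = (\<Sum>u\<in>?S. (\<Sum>j\<in>J. c j * h j u) * opw u F m)"
    by (rule rho_superset[OF fS ss])
  also have "\<dots> = (\<Sum>j\<in>J. c j * (\<Sum>u\<in>?S. h j u * opw u F m))"
    by (simp add: sum_distrib_right sum_distrib_left sum.swap[of _ J] algebra_simps)
  also have "\<dots> = (\<Sum>j\<in>J. c j * rho (h j) F m)"
    by (rule sum.cong[OF refl]) (use J fS in \<open>auto intro!: rho_superset[symmetric]\<close>)
  finally show ?thesis .
qed


lemma two_term:
  assumes gh: "g \<noteq> h" and R: "\<And>F m. Top g (Top h F) m = c * Top h (Top g F) m"
  shows "finite (supp (ncsub (w2 g h) (ncsmult c (w2 h g)))) \<and> (\<forall>F m. rho (ncsub (w2 g h) (ncsmult c (w2 h g))) F m = 0)"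
proof -
  let ?r = "ncsub (w2 g h) (ncsmult c (w2 h g))"
  have rv: "?r u = (if u = [g,h] then 1 else 0) - c * (if u = [h,g] then 1 else 0)" for u
    unfolding ncsub_def ncsmult_def w2_def ncmono_def by simp
  have z: "?r u = 0" if "u \<noteq> [g,h]" "u \<noteq> [h,g]" for u using that by (simp add: rv)
  have ss: "supp ?r \<subseteq> {[g,h],[h,g]}"
    unfolding supp_def using z by blast
  have ne: "[g,h] \<noteq> [h,g]" using gh by simp
  have fin: "finite (supp ?r)" using ss finite_subset by blast
  have "rho ?r F m = 0" for F m
  proof -
    have "rho ?r F m = (\<Sum>u\<in>{[g,h],[h,g]}. ?r u * opw u F m)" by (rule rho_superset[OF _ ss]) simp
    also have "\<dots> = Top g (Top h F) m - c * Top h (Top g F) m"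
      using ne gh by (simp add: rv)
    finally show ?thesis using R by simp
  qed
  then show ?thesis using fin by blast
qed

lemma rel_zero: "r \<in> weyl_rels n q L \<Longrightarrow> finite (supp r) \<and> (\<forall>F m. rho r F m = 0)"
proof -
  assume "r \<in> weyl_rels n q L"
  then consider
      (a) i j where "1 \<le> i" "i < j" "j \<le> n" "r = ncsub (w2 (X i) (X j)) (ncsmult (L i j) (w2 (X j) (X i)))"
    | (b) i j where "1 \<le> i" "i < j" "j \<le> n" "r = ncsub (w2 (Y j) (Y i)) (ncsmult (L j i) (w2 (Y i) (Y j)))"
    | (c) i j where "1 \<le> i" "i < j" "j \<le> n" "r = ncsub (w2 (X i) (Y j)) (ncsmult (L j i) (w2 (Y j) (X i)))"
    | (d) i j where "1 \<le> i" "i < j" "j \<le> n" "r = ncsub (w2 (X j) (Y i)) (ncsmult (L i j) (w2 (Y i) (X j)))"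
    | (e) i where "1 \<le> i" "i \<le> n" "r = ncsub (ncsub (w2 (X i) (Y i)) (ncsmult (q i) (w2 (Y i) (X i)))) (ncconst 1)"
    unfolding weyl_rels_def by blast
  then show ?thesis
  proof cases
    case a
    have "\<And>F m. Top (X i) (Top (X j) F) m = L i j * Top (X j) (Top (X i) F) m" using a by (simp add: Top_def R1)
    then show ?thesis unfolding a(4) by (intro two_term) (use a in auto)
  next
    case b
    have "\<And>F m. Top (Y j) (Top (Y i) F) m = L j i * Top (Y i) (Top (Y j) F) m" using b by (simp add: Top_def R2)
    then show ?thesis unfolding b(4) by (intro two_term) (use b in auto)
  next
    case c
    have "\<And>F m. Top (X i) (Top (Y j) F) m = L j i * Top (Y j) (Top (X i) F) m" using c by (simp add: Top_def R3)
    then show ?thesis unfolding c(4) by (intro two_term) (use c in auto)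
  next
    case d
    have "\<And>F m. Top (X j) (Top (Y i) F) m = L i j * Top (Y i) (Top (X j) F) m" using d by (simp add: Top_def R4)
    then show ?thesis unfolding d(4) by (intro two_term) (use d in auto)
  next
    case e
    have ss: "supp r \<subseteq> {[X i,Y i],[Y i,X i],[]}" unfolding e
      by (auto simp: supp_def ncsub_def ncsmult_def w2_def ncmono_def ncconst_def)
    have fin: "finite (supp r)" using ss finite_subset by blast
    have "rho r F m = 0" for F m
    proof -
      have "rho r F m = (\<Sum>u\<in>{[X i,Y i],[Y i,X i],[]}. r u * opw u F m)" by (rule rho_superset[OF _ ss]) simp
      also have "\<dots> = TX i (TY i F) m - q i * TY i (TX i F) m - F m"
        unfolding e by (simp add: ncsub_def ncsmult_def w2_def ncmono_def ncconst_def Top_def)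
      finally show ?thesis using R5[OF e(1,2)] by simp
    qed
    then show ?thesis using fin by blast
  qed
qed

lemma ideal_kernel: "p \<in> nc_ideal (weyl_rels n q L) \<Longrightarrow> finite (supp p) \<and> (\<forall>F m. rho p F m = 0)"
proof (induction rule: nc_ideal.induct)
  case zero then show ?case by (simp add: supp_def rho_def)
next
  case (gen r) then show ?case by (rule rel_zero)
next
  case (add p p')
  have f: "finite (supp p)" "finite (supp p')" using add.IH by simp_all
  have z: "rho p F m = 0" "rho p' F m = 0" for F m using add.IH by simp_all
  have "finite (supp (ncadd p p'))" using f supp_ncadd[of p p'] by (meson finite_Un finite_subset)
  moreover have "rho (ncadd p p') F m = 0" for F m using rho_ncadd[OF f] z by simp
  ultimately show ?case by (intro conjI allI)
next
  case (smult p c)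
  have f: "finite (supp p)" using smult.IH by simp
  have z: "rho p F m = 0" for F m using smult.IH by simp
  have "finite (supp (ncsmult c p))" using f supp_ncsmult[of c p] by (meson finite_subset)
  moreover have "rho (ncsmult c p) F m = 0" for F m using rho_ncsmult[OF f] z by simp
  ultimately show ?case by (intro conjI allI)
next
  case (mult p v w)
  have f: "finite (supp p)" using mult.IH by simp
  have z0: "rho p F m = 0" for F m using mult.IH by simp
  have f1: "finite (supp (ncmul p (ncmono w 1)))" using f rho_rshift(2)[OF f, of w] by simp
  have z: "rho (ncmul p (ncmono w 1)) F = (\<lambda>m. 0)" for F
  proof (rule ext)
    fix m show "rho (ncmul p (ncmono w 1)) F m = 0" using rho_rshift(1)[OF f, of w F m] z0 by simp
  qed
  have "finite (supp (ncmul (ncmono v 1) (ncmul p (ncmono w 1))))" using f1 rho_lshift(2)[OF f1, of v] by simp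
  moreover have "rho (ncmul (ncmono v 1) (ncmul p (ncmono w 1))) F m = 0" for F m
    using rho_lshift(1)[OF f1, of v] by (simp add: opw_zero z)
  ultimately show ?case by (intro conjI allI)
qed

end


lemma ncmono_mul: "ncmul (ncmono s 1) (ncmono v (1::'k::comm_semiring_1)) = ncmono (s @ v) 1"
proof (rule ext)
  fix x
  have "(take (length s) x = s \<and> drop (length s) x = v) = (x = s @ v)"
    by (metis append_eq_conv_conj)
  moreover have "ncmul (ncmono s 1) (ncmono v (1::'k)) x = (if take (length s) x = s then 1 * ncmono v 1 (drop (length s) x) else 0)"
    by (rule ncmul_mono_left)
  ultimately show "ncmul (ncmono s 1) (ncmono v (1::'k)) x = ncmono (s @ v) 1 x"
    by (auto simp: ncmono_def)
qed

definition LR :: "gen list \<Rightarrow> gen list \<Rightarrow> 'k::comm_semiring_1 ncpoly \<Rightarrow> 'k ncpoly" where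
  "LR u v F = ncmul (ncmono u 1) (ncmul F (ncmono v 1))"

lemma LR_mono: "LR u v (ncmono s 1) = ncmono (u @ s @ v) (1::'k::comm_semiring_1)"
  unfolding LR_def ncmono_mul by simp

lemma LR_lin: "LR u v (\<lambda>x. c * A x + d * B x) = (\<lambda>x. c * LR u v A x + d * LR u v (B::'k::comm_ring_1 ncpoly) x)"
  by (rule ext) (simp add: LR_def ncmul_mono_left ncmul_mono_right algebra_simps)

lemma LR_sub: "LR u v (ncsub A B) = ncsub (LR u v A) (LR u v (B::'k::comm_ring_1 ncpoly))"
  by (rule ext) (simp add: LR_def ncsub_def ncmul_mono_left ncmul_mono_right algebra_simps)

context qw begin

abbreviation Id where "Id \<equiv> nc_ideal (weyl_rels n q L)"

definition weq :: "'k ncpoly \<Rightarrow> 'k ncpoly \<Rightarrow> bool" where "weq f g \<longleftrightarrow> ncsub f g \<in> Id"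

lemma weq_refl: "weq f f"
proof -
  have "ncsub f f = (\<lambda>u. 0)" by (rule ext) (simp add: ncsub_def)
  then show ?thesis unfolding weq_def by (simp add: nc_ideal.zero)
qed

lemma weq_sym: "weq f g \<Longrightarrow> weq g f"
proof -
  assume "weq f g"
  then have "ncsmult (-1) (ncsub f g) \<in> Id" unfolding weq_def by (rule nc_ideal.smult)
  moreover have "ncsmult (-1) (ncsub f g) = ncsub g f" by (rule ext) (simp add: ncsub_def ncsmult_def)
  ultimately show ?thesis unfolding weq_def by simp
qed

lemma weq_trans: "weq f g \<Longrightarrow> weq g h \<Longrightarrow> weq f h"
proof -
  assume "weq f g" "weq g h"
  then have "ncadd (ncsub f g) (ncsub g h) \<in> Id" unfolding weq_def by (rule nc_ideal.add)
  moreover have "ncadd (ncsub f g) (ncsub g h) = ncsub f h" by (rule ext) (simp add: ncsub_def ncadd_def)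
  ultimately show ?thesis unfolding weq_def by simp
qed

lemma weq_lin2: "weq A A' \<Longrightarrow> weq B B' \<Longrightarrow> weq (\<lambda>x. c * A x + d * B x) (\<lambda>x. c * A' x + d * B' x)"
proof -
  assume "weq A A'" "weq B B'"
  then have "ncadd (ncsmult c (ncsub A A')) (ncsmult d (ncsub B B')) \<in> Id" unfolding weq_def
    by (intro nc_ideal.add nc_ideal.smult)
  moreover have "ncadd (ncsmult c (ncsub A A')) (ncsmult d (ncsub B B')) = ncsub (\<lambda>x. c * A x + d * B x) (\<lambda>x. c * A' x + d * B' x)"
    by (rule ext) (simp add: ncsub_def ncadd_def ncsmult_def algebra_simps)
  ultimately show ?thesis unfolding weq_def by simp
qed

lemma weq_LR: "weq A B \<Longrightarrow> weq (LR u v A) (LR u v B)"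
  unfolding weq_def LR_sub[symmetric] unfolding LR_def by (rule nc_ideal.mult)

lemma weq_sum: "finite S \<Longrightarrow> (\<And>s. s \<in> S \<Longrightarrow> weq (f s) (g s)) \<Longrightarrow>
   weq (\<lambda>x. \<Sum>s\<in>S. c s * f s x) (\<lambda>x. \<Sum>s\<in>S. c s * g s x)"
proof (induction S rule: finite_induct)
  case empty then show ?case using weq_refl by simp
next
  case (insert s S)
  have "weq (\<lambda>x. c s * f s x + 1 * (\<Sum>s\<in>S. c s * f s x)) (\<lambda>x. c s * g s x + 1 * (\<Sum>s\<in>S. c s * g s x))"
    using insert by (intro weq_lin2) auto
  then show ?case using insert by simp
qed

definition rank :: "gen \<Rightarrow> nat" where "rank g = (case g of Y j \<Rightarrow> j | X j \<Rightarrow> n + j)"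

definition okw :: "gen list \<Rightarrow> bool" where "okw w \<longleftrightarrow> (\<forall>g\<in>set w. gidx g \<in> {1..n})"

definition nice :: "gen list \<Rightarrow> bool" where "nice w \<longleftrightarrow> sorted (map rank w) \<and> okw w"

primrec mu :: "gen list \<Rightarrow> nat" where
  "mu [] = 0"
| "mu (g # w) = rank g * length w + mu w"

lemma mu_swap: "rank h < rank g \<Longrightarrow> mu (u @ h # g # v) < mu (u @ g # h # v)"
proof (induction u)
  case Nil
  then show ?case by (simp add: algebra_simps)
next
  case (Cons x u) then show ?case by simp
qed

lemma unsorted_split: "\<not> sorted (map rank w) \<Longrightarrow> \<exists>u g h v. w = u @ g # h # v \<and> rank h < rank g"
proof (induction w)
  case Nil then show ?case by simp
next
  case (Cons x w)
  show ?case
  proof (cases w)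
    case Nil then show ?thesis using Cons by simp
  next
    case (Cons y w')
    show ?thesis
    proof (cases "rank x \<le> rank y")
      case True
      have s2: "sorted (rank x # rank y # map rank w') = (rank x \<le> rank y \<and> sorted (rank y # map rank w'))"
        by (rule sorted2)
      have "\<not> sorted (map rank w)" using Cons.prems Cons True by (simp only: list.map s2) simp
      then obtain u g h v where "w = u @ g # h # v" "rank h < rank g" using Cons.IH by blast
      then show ?thesis by (metis append_Cons)
    next
      case False
      then show ?thesis using Cons by (metis append_Nil not_le)
    qed
  qed
qed

lemma swap_rel: "gidx g \<in> {1..n} \<Longrightarrow> gidx h \<in> {1..n} \<Longrightarrow> rank h < rank g \<Longrightarrow>
   \<exists>c d. weq (w2 g h) (\<lambda>x. c * w2 h g x + d * ncmono [] 1 x)"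
proof -
  assume g: "gidx g \<in> {1..n}" and h: "gidx h \<in> {1..n}" and r: "rank h < rank g"
  have z: "(\<lambda>x. c * w2 h g x + 0 * ncmono [] 1 x) = ncsmult c (w2 h g)" for c :: 'k
    by (rule ext) (simp add: ncsmult_def)
  show ?thesis
  proof (cases g)
    case (Y j)
    then obtain i where hi: "h = Y i" "i < j" using r h g by (cases h) (auto simp: rank_def)
    have "ncsub (w2 (Y j) (Y i)) (ncsmult (L j i) (w2 (Y i) (Y j))) \<in> weyl_rels n q L"
      unfolding weyl_rels_def using g h Y hi by auto
    then have "ncsub (w2 (Y j) (Y i)) (ncsmult (L j i) (w2 (Y i) (Y j))) \<in> Id" by (rule nc_ideal.gen)
    then have "weq (w2 g h) (\<lambda>x. L j i * w2 h g x + 0 * ncmono [] 1 x)"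
      unfolding weq_def z using Y hi by simp
    then show ?thesis by blast
  next
    case (X j)
    show ?thesis
    proof (cases h)
      case (X i)
      then have ij: "i < j" using r \<open>g = X j\<close> by (simp add: rank_def)
      have "ncsub (w2 (X i) (X j)) (ncsmult (L i j) (w2 (X j) (X i))) \<in> weyl_rels n q L"
        unfolding weyl_rels_def using g h X \<open>g = X j\<close> ij by auto
      then have "ncsub (w2 (X i) (X j)) (ncsmult (L i j) (w2 (X j) (X i))) \<in> Id" by (rule nc_ideal.gen)
      then have "ncsmult (L j i) (ncsub (w2 (X i) (X j)) (ncsmult (L i j) (w2 (X j) (X i)))) \<in> Id"
        by (rule nc_ideal.smult)
      moreover have lji: "L j i * L i j = 1" using L_inv g h X \<open>g = X j\<close> by auto
      moreover have "ncsmult (L j i) (ncsub (w2 (X i) (X j)) (ncsmult (L i j) (w2 (X j) (X i))))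
          = ncsub (ncsmult (L j i) (w2 (X i) (X j))) (w2 (X j) (X i))"
        by (rule ext) (simp add: ncsub_def ncsmult_def right_diff_distrib lji mult.assoc[symmetric])
      ultimately have "weq (ncsmult (L j i) (w2 (X i) (X j))) (w2 (X j) (X i))"
        unfolding weq_def by simp
      then have "weq (w2 g h) (\<lambda>x. L j i * w2 h g x + 0 * ncmono [] 1 x)"
        unfolding z using X \<open>g = X j\<close> by (simp add: weq_sym)
      then show ?thesis by blast
    next
      case (Y i)
      consider "i < j" | "j < i" | "i = j" by linarith
      then show ?thesis
      proof cases
        case 1
        have "ncsub (w2 (X j) (Y i)) (ncsmult (L i j) (w2 (Y i) (X j))) \<in> weyl_rels n q L"
          unfolding weyl_rels_def using g h X Y 1 by auto
        then have "ncsub (w2 (X j) (Y i)) (ncsmult (L i j) (w2 (Y i) (X j))) \<in> Id" by (rule nc_ideal.gen)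
        then have "weq (w2 g h) (\<lambda>x. L i j * w2 h g x + 0 * ncmono [] 1 x)"
          unfolding weq_def z using X Y by simp
        then show ?thesis by blast
      next
        case 2
        have "ncsub (w2 (X j) (Y i)) (ncsmult (L i j) (w2 (Y i) (X j))) \<in> weyl_rels n q L"
          unfolding weyl_rels_def using g h X Y 2 by auto
        then have "ncsub (w2 (X j) (Y i)) (ncsmult (L i j) (w2 (Y i) (X j))) \<in> Id" by (rule nc_ideal.gen)
        then have "weq (w2 g h) (\<lambda>x. L i j * w2 h g x + 0 * ncmono [] 1 x)"
          unfolding weq_def z using X Y by simp
        then show ?thesis by blast
      next
        case 3
        have "ncsub (ncsub (w2 (X j) (Y j)) (ncsmult (q j) (w2 (Y j) (X j)))) (ncconst 1) \<in> weyl_rels n q L"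
          unfolding weyl_rels_def using g X by auto
        then have "ncsub (ncsub (w2 (X j) (Y j)) (ncsmult (q j) (w2 (Y j) (X j)))) (ncconst 1) \<in> Id" by (rule nc_ideal.gen)
        moreover have "ncsub (ncsub (w2 (X j) (Y j)) (ncsmult (q j) (w2 (Y j) (X j)))) (ncconst 1)
           = ncsub (w2 g h) (\<lambda>x. q j * w2 h g x + 1 * ncmono [] 1 x)"
          using X Y 3 by (intro ext) (simp add: ncsub_def ncsmult_def ncconst_def)
        ultimately have "weq (w2 g h) (\<lambda>x. q j * w2 h g x + 1 * ncmono [] 1 x)"
          unfolding weq_def by simp
        then show ?thesis by blast
      qed
    qed
  qed
qed

lemma span_word: "okw w \<Longrightarrow> \<exists>f. finite (supp f) \<and> (\<forall>u\<in>supp f. nice u) \<and> weq (ncmono w 1) f"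
proof (induction w rule: wf_induct[OF wf_measures[of "[length, mu]"]])
  case (1 w)
  show ?case
  proof (cases "sorted (map rank w)")
    case True
    have "supp (ncmono w (1::'k)) = {w}" by (auto simp: supp_def ncmono_def)
    then show ?thesis using True 1 weq_refl by (intro exI[of _ "ncmono w 1"]) (auto simp: nice_def)
  next
    case False
    then obtain u g h v where w: "w = u @ g # h # v" and r: "rank h < rank g" using unsorted_split by blast
    have gh: "gidx g \<in> {1..n}" "gidx h \<in> {1..n}" using 1 w by (auto simp: okw_def)
    obtain c d where cd: "weq (w2 g h) (\<lambda>x. c * w2 h g x + d * ncmono [] 1 x)"
      using swap_rel[OF gh r] by blast
    have "weq (LR u v (w2 g h)) (LR u v (\<lambda>x. c * w2 h g x + d * ncmono [] 1 x))"
      using cd by (rule weq_LR)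
    then have e1: "weq (ncmono w 1) (\<lambda>x. c * ncmono (u @ h # g # v) 1 x + d * ncmono (u @ v) 1 x)"
      unfolding LR_lin w2_def LR_mono w by simp
    have ok1: "okw (u @ h # g # v)" "okw (u @ v)" using 1 w by (auto simp: okw_def)
    have m1: "(u @ h # g # v, w) \<in> measures [length, mu]" using mu_swap[OF r, of u v] w by simp
    have m2: "(u @ v, w) \<in> measures [length, mu]" using w by simp
    obtain f1 where f1: "finite (supp f1)" "\<forall>u\<in>supp f1. nice u" "weq (ncmono (u @ h # g # v) 1) f1"
      using 1(1)[rule_format, OF m1 ok1(1)] by blast
    obtain f2 where f2: "finite (supp f2)" "\<forall>u\<in>supp f2. nice u" "weq (ncmono (u @ v) 1) f2"
      using 1(1)[rule_format, OF m2 ok1(2)] by blast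
    let ?f = "\<lambda>x. c * f1 x + d * f2 x"
    have "supp ?f \<subseteq> supp f1 \<union> supp f2" by (auto simp: supp_def)
    then have "finite (supp ?f)" "\<forall>u\<in>supp ?f. nice u" using f1 f2 finite_subset by blast+
    moreover have "weq (ncmono w 1) ?f" using e1 weq_lin2[OF f1(3) f2(3)] weq_trans by blast
    ultimately show ?thesis by blast
  qed
qed

lemma free_decomp: "finite (supp (a::'k ncpoly)) \<Longrightarrow> a = (\<lambda>x. \<Sum>w\<in>supp a. a w * ncmono w 1 x)"
proof (rule ext)
  fix x assume "finite (supp a)"
  have "(\<Sum>w\<in>supp a. a w * ncmono w 1 x) = (\<Sum>w\<in>supp a. if x = w then a w else 0)"
    by (rule sum.cong) (auto simp: ncmono_def)
  also have "\<dots> = a x" using \<open>finite (supp a)\<close> by (simp add: sum.delta supp_def)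
  finally show "a x = (\<Sum>w\<in>supp a. a w * ncmono w 1 x)" by simp
qed

lemma span_elem: "finite (supp a) \<Longrightarrow> \<forall>w\<in>supp a. okw w \<Longrightarrow> \<exists>f. finite (supp f) \<and> (\<forall>u\<in>supp f. nice u) \<and> weq a f"
proof -
  assume fa: "finite (supp a)" and ok: "\<forall>w\<in>supp a. okw w"
  have "\<forall>w\<in>supp a. \<exists>f. finite (supp f) \<and> (\<forall>u\<in>supp f. nice u) \<and> weq (ncmono w 1) f"
    using ok span_word by blast
  then obtain F where F: "\<And>w. w \<in> supp a \<Longrightarrow> finite (supp (F w)) \<and> (\<forall>u\<in>supp (F w). nice u) \<and> weq (ncmono w 1) (F w)"
    by metis
  let ?f = "\<lambda>x. \<Sum>w\<in>supp a. a w * F w x"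
  have ss: "supp ?f \<subseteq> (\<Union>w\<in>supp a. supp (F w))"
  proof
    fix x assume "x \<in> supp ?f"
    then obtain w where "w \<in> supp a" "a w * F w x \<noteq> 0" unfolding supp_def
      using sum.not_neutral_contains_not_neutral by (smt (verit) mem_Collect_eq)
    then show "x \<in> (\<Union>w\<in>supp a. supp (F w))" by (auto simp: supp_def)
  qed
  have "finite (supp ?f)" using ss fa F by (meson finite_UN_I finite_subset)
  moreover have "\<forall>u\<in>supp ?f. nice u" using ss F by blast
  moreover have "weq a ?f"
    using weq_sum[OF fa, of "\<lambda>w. ncmono w 1" F a] F free_decomp[OF fa] by auto
  ultimately show ?thesis by blast
qed

end


definition pos :: "gen \<Rightarrow> nat" where "pos g = (case g of Y j \<Rightarrow> 2*j | X j \<Rightarrow> Suc (2*j))"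
definition eps :: "gen \<Rightarrow> nat \<Rightarrow> int" where "eps g = (case g of Y j \<Rightarrow> eY j | X j \<Rightarrow> eX j)"
definition exps :: "gen list \<Rightarrow> nat \<Rightarrow> int" where "exps w = (\<lambda>p. int (length (filter (\<lambda>g. pos g = p) w)))"
definition delta :: "(nat \<Rightarrow> int) \<Rightarrow> (nat \<Rightarrow> int) \<Rightarrow> 'k::zero_neq_one" where "delta e = (\<lambda>m. if m = e then 1 else 0)"

lemma eps_app: "eps g k = (if k = pos g then 1 else 0)"
  by (cases g) (auto simp: eps_def pos_def)

lemma pos_inj: "pos g = pos h \<Longrightarrow> g = h"
  by (cases g; cases h) (auto simp: pos_def)

lemma exps_Nil[simp]: "exps [] = 0" by (auto simp: exps_def)
lemma exps_Cons: "exps (g # w) = eps g + exps w"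
  by (rule ext) (auto simp: exps_def eps_app)
lemma exps_zero: "(\<forall>h\<in>set w. pos h \<noteq> p) \<Longrightarrow> exps w p = 0"
  by (auto simp: exps_def filter_empty_conv)
lemma exps_nonneg: "exps w p \<ge> 0" by (simp add: exps_def)

lemma count_list_filter: "count_list w g = length (filter ((=) g) w)"
  by (induction w) auto

lemma exps_count: "exps w (pos g) = int (count (mset w) g)"
proof -
  have "filter (\<lambda>h. pos h = pos g) w = filter (\<lambda>h. g = h) w"
    by (rule filter_cong) (auto dest: pos_inj)
  then show ?thesis by (simp add: exps_def count_mset count_list_filter)
qed

context qw begin

definition deg :: "(nat \<Rightarrow> int) \<Rightarrow> int" where "deg e = (\<Sum>k<2*n+2. e k)"

lemma deg_add: "deg (a + b) = deg a + deg b" by (simp add: deg_def sum.distrib)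
lemma deg_diff: "deg (a - b) = deg a - deg b" by (simp add: deg_def sum_subtractf)
lemma deg_zero[simp]: "deg 0 = 0" by (simp add: deg_def)

lemma deg_eps: "gidx g \<in> {1..n} \<Longrightarrow> deg (eps g) = 1"
proof -
  assume g: "gidx g \<in> {1..n}"
  have p: "pos g < 2*n+2" using g by (cases g) (auto simp: pos_def)
  have "deg (eps g) = (\<Sum>k<2*n+2. if k = pos g then 1 else 0)" by (simp add: deg_def eps_app)
  also have "\<dots> = 1" using p by (simp add: sum.delta)
  finally show ?thesis .
qed

lemma deg_exps: "okw w \<Longrightarrow> deg (exps w) = int (length w)"
  by (induction w) (auto simp: okw_def exps_Cons deg_add deg_eps)

lemma eps_Y: "eps (Y j) = eY j" and eps_X: "eps (X j) = eX j" by (simp_all add: eps_def)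

lemma Top_delta_Y: "j \<le> n \<Longrightarrow> (\<forall>k\<in>{1..<j}. e (2*k) = 0) \<Longrightarrow> Top (Y j) (delta e) = delta (e + eY j)"
proof (rule ext)
  fix m assume j: "j \<le> n" and z: "\<forall>k\<in>{1..<j}. e (2*k) = 0"
  have p1: "PY j e = 1" unfolding PY_def using z by (intro chi_zero) auto
  have "(m - eY j = e) = (m = e + eY j)" by (auto simp: algebra_simps)
  moreover have "PY j (e + eY j) = 1" using p1 j by (simp add: PY_add PY_eY)
  ultimately show "Top (Y j) (delta e) m = delta (e + eY j) m"
    by (auto simp: Top_def TY_def delta_def)
qed

lemma Top_delta_X: "1 \<le> j \<Longrightarrow> j \<le> n \<Longrightarrow> (\<forall>k\<in>{1..n}. e (2*k) = 0) \<Longrightarrow> (\<forall>k\<in>{1..<j}. e (Suc (2*k)) = 0)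
   \<Longrightarrow> Top (X j) (delta e) = delta (e + eX j)"
proof (rule ext)
  fix m assume j: "1 \<le> j" "j \<le> n" and z: "\<forall>k\<in>{1..n}. e (2*k) = 0" and z2: "\<forall>k\<in>{1..<j}. e (Suc (2*k)) = 0"
  have p1: "PX2 j e = 1" unfolding PX2_def using z z2 j
    by (simp add: chi_zero)
  have e1: "(m - eX j = e) = (m = e + eX j)" by (auto simp: algebra_simps)
  have e2: "m + eY j = e \<Longrightarrow> m (2*j) + 1 = 0"
  proof -
    assume "m + eY j = e"
    then have "m (2*j) + 1 = e (2*j)" by (auto dest: fun_cong[where x="2*j"])
    then show ?thesis using z j by auto
  qed
  have q0: "qint j 0 = 0" by (simp add: qint_def)
  have "PX2 j (e + eX j) = 1" using p1 j by (simp add: PX2_add PX2_eX)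
  then show "Top (X j) (delta e) m = delta (e + eX j) m"
    using e1 e2 q0 by (auto simp: Top_def TX_def delta_def)
qed

lemma nice_Cons: "nice (g # w) \<Longrightarrow> nice w" by (auto simp: nice_def okw_def)

lemma nice_op: "nice w \<Longrightarrow> opw w (delta 0) = delta (exps w)"
proof (induction w)
  case Nil then show ?case by simp
next
  case (Cons g w)
  have IH: "opw w (delta 0) = delta (exps w)" using Cons nice_Cons by blast
  have sr: "\<forall>h\<in>set w. rank g \<le> rank h" and ok: "okw (g # w)" using Cons.prems by (auto simp: nice_def)
  show ?case
  proof (cases g)
    case (Y j)
    have j: "1 \<le> j" "j \<le> n" using ok Y by (auto simp: okw_def)
    have "\<forall>k\<in>{1..<j}. exps w (2*k) = 0"
    proof
      fix k assume k: "k \<in> {1..<j}"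
      have "\<forall>h\<in>set w. pos h \<noteq> 2*k"
      proof
        fix h assume h: "h \<in> set w"
        show "pos h \<noteq> 2*k"
        proof
          assume "pos h = 2*k"
          then have "h = Y k" using pos_inj[of h "Y k"] by (simp add: pos_def)
          then show False using sr h k Y by (auto simp: rank_def)
        qed
      qed
      then show "exps w (2*k) = 0" by (rule exps_zero)
    qed
    then have "Top (Y j) (delta (exps w)) = delta (exps w + eY j)" using j by (intro Top_delta_Y) auto
    moreover have "opw (g # w) (delta 0) = Top (Y j) (delta (exps w))" by (simp only: opw.simps IH Y)
    moreover have e: "exps (g # w) = exps w + eY j" unfolding Y exps_Cons eps_Y by (rule add.commute)
    ultimately show ?thesis by (simp only: e)
  next
    case (X j)
    have j: "1 \<le> j" "j \<le> n" using ok X by (auto simp: okw_def)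
    have okw: "okw w" using ok by (auto simp: okw_def)
    have z1: "\<forall>k\<in>{1..n}. exps w (2*k) = 0"
    proof
      fix k assume k: "k \<in> {1..n}"
      have "\<forall>h\<in>set w. pos h \<noteq> 2*k"
      proof
        fix h assume h: "h \<in> set w"
        show "pos h \<noteq> 2*k"
        proof
          assume "pos h = 2*k"
          then have "h = Y k" using pos_inj[of h "Y k"] by (simp add: pos_def)
          then show False using sr h k X j by (auto simp: rank_def)
        qed
      qed
      then show "exps w (2*k) = 0" by (rule exps_zero)
    qed
    have z2: "\<forall>k\<in>{1..<j}. exps w (Suc (2*k)) = 0"
    proof
      fix k assume k: "k \<in> {1..<j}"
      have "\<forall>h\<in>set w. pos h \<noteq> Suc (2*k)"
      proof
        fix h assume h: "h \<in> set w"
        show "pos h \<noteq> Suc (2*k)"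
        proof
          assume "pos h = Suc (2*k)"
          then have "h = X k" using pos_inj[of h "X k"] by (simp add: pos_def)
          then show False using sr h k X by (auto simp: rank_def)
        qed
      qed
      then show "exps w (Suc (2*k)) = 0" by (rule exps_zero)
    qed
    have "Top (X j) (delta (exps w)) = delta (exps w + eX j)" using j z1 z2 by (intro Top_delta_X) auto
    moreover have "opw (g # w) (delta 0) = Top (X j) (delta (exps w))" by (simp only: opw.simps IH X)
    moreover have e: "exps (g # w) = exps w + eX j" unfolding X exps_Cons eps_X by (rule add.commute)
    ultimately show ?thesis by (simp only: e)
  qed
qed

lemma rank_inj: "okw w \<Longrightarrow> inj_on rank (set w)"
proof (rule inj_onI)
  fix g h assume ok: "okw w" and g: "g \<in> set w" and h: "h \<in> set w" and r: "rank g = rank h"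
  have "gidx g \<in> {1..n}" "gidx h \<in> {1..n}" using ok g h by (auto simp: okw_def)
  then show "g = h" using r by (cases g; cases h) (auto simp: rank_def)
qed

lemma nice_inj: "nice w \<Longrightarrow> nice w' \<Longrightarrow> exps w = exps w' \<Longrightarrow> w = w'"
proof -
  assume nw: "nice w" and nw': "nice w'" and e: "exps w = exps w'"
  have "count (mset w) g = count (mset w') g" for g
    using fun_cong[OF e, of "pos g"] by (simp add: exps_count)
  then have m: "mset w = mset w'" by (rule multiset_eqI)
  have "sort_key rank w = w'"
    using m rank_inj nw nw' by (intro sort_key_inj_key_eq) (auto simp: nice_def)
  moreover have "sort_key rank w = w"
    using rank_inj nw by (intro sort_key_inj_key_eq) (auto simp: nice_def)
  ultimately show ?thesis by simp
qed

definition nf :: "'k ncpoly \<Rightarrow> (nat \<Rightarrow> int) \<Rightarrow> 'k" where "nf f = rho f (delta 0)"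

lemma nf_nice: "finite (supp f) \<Longrightarrow> \<forall>w\<in>supp f. nice w \<Longrightarrow> nf f M = (\<Sum>w\<in>supp f. f w * delta (exps w) M)"
  unfolding nf_def rho_def by (intro sum.cong) (auto simp: nice_op)

end


context qw begin

lemma Top_lin: "Top g (\<lambda>M. c * F1 M + F2 M) M = c * Top g F1 M + Top g F2 M"
  by (cases g) (simp_all add: Top_def TY_def TX_def algebra_simps)

lemma okw1: "okw [g] \<longleftrightarrow> gidx g \<in> {1..n}" by (simp add: okw_def)

lemma deg_eY: "1 \<le> j \<Longrightarrow> j \<le> n \<Longrightarrow> deg (eY j) = 1" using deg_eps[of "Y j"] by (simp add: eps_Y)
lemma deg_eX: "1 \<le> j \<Longrightarrow> j \<le> n \<Longrightarrow> deg (eX j) = 1" using deg_eps[of "X j"] by (simp add: eps_X)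

lemma Top_supp: "gidx g \<in> {1..n} \<Longrightarrow> (\<forall>M. G M \<noteq> 0 \<longrightarrow> deg M \<le> D) \<Longrightarrow> (\<forall>M. Top g G M \<noteq> 0 \<longrightarrow> deg M \<le> D + 1)"
proof (intro allI impI)
  fix M assume g: "gidx g \<in> {1..n}" and G: "\<forall>M. G M \<noteq> 0 \<longrightarrow> deg M \<le> D" and T: "Top g G M \<noteq> 0"
  show "deg M \<le> D + 1"
  proof (cases g)
    case (Y j)
    then have "G (M - eY j) \<noteq> 0" using T by (auto simp: Top_def TY_def)
    then have "deg (M - eY j) \<le> D" using G by blast
    then show ?thesis using g Y by (simp add: deg_diff deg_eY)
  next
    case (X j)
    then have "G (M + eY j) \<noteq> 0 \<or> G (M - eX j) \<noteq> 0" using T by (auto simp: Top_def TX_def)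
    then have "deg (M + eY j) \<le> D \<or> deg (M - eX j) \<le> D" using G by blast
    then show ?thesis using g X by (auto simp: deg_diff deg_add deg_eY deg_eX)
  qed
qed

lemma Top_delta_gen: "gidx g \<in> {1..n} \<Longrightarrow> \<exists>c G. c \<noteq> 0 \<and> Top g (delta e) = (\<lambda>M. c * delta (e + eps g) M + G M)
    \<and> (\<forall>M. G M \<noteq> 0 \<longrightarrow> deg M \<le> deg e - 1)"
proof -
  assume g: "gidx g \<in> {1..n}"
  show ?thesis
  proof (cases g)
    case (Y j)
    have j: "1 \<le> j" "j \<le> n" using g Y by auto
    have "Top g (delta e) = (\<lambda>M. PY j (e + eY j) * delta (e + eps g) M + 0)"
    proof (rule ext)
      fix M
      have "(M - eY j = e) = (M = e + eY j)" by (auto simp: algebra_simps)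
      then show "Top g (delta e) M = PY j (e + eY j) * delta (e + eps g) M + 0"
        using Y by (auto simp: Top_def TY_def delta_def eps_Y)
    qed
    moreover have "PY j (e + eY j) \<noteq> 0" using PY_nz j by blast
    ultimately show ?thesis by (intro exI[of _ "PY j (e + eY j)"] exI[of _ "\<lambda>M. 0"]) auto
  next
    case (X j)
    have j: "1 \<le> j" "j \<le> n" using g X by auto
    let ?G = "\<lambda>M. PX1 j M * qint j (M (2*j) + 1) * delta e (M + eY j)"
    have "Top g (delta e) = (\<lambda>M. PX2 j (e + eX j) * delta (e + eps g) M + ?G M)"
    proof (rule ext)
      fix M
      have "(M - eX j = e) = (M = e + eX j)" by (auto simp: algebra_simps)
      then show "Top g (delta e) M = PX2 j (e + eX j) * delta (e + eps g) M + ?G M"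
        using X by (auto simp: Top_def TX_def delta_def eps_X)
    qed
    moreover have "PX2 j (e + eX j) \<noteq> 0" using PX2_nz j by blast
    moreover have "\<forall>M. ?G M \<noteq> 0 \<longrightarrow> deg M \<le> deg e - 1"
    proof (intro allI impI)
      fix M assume "?G M \<noteq> 0"
      then have "M + eY j = e" by (auto simp: delta_def split: if_splits)
      then have "deg M + 1 = deg e" using j by (auto simp: deg_add deg_eY)
      then show "deg M \<le> deg e - 1" by simp
    qed
    ultimately show ?thesis by (intro exI[of _ "PX2 j (e + eX j)"] exI[of _ ?G]) blast
  qed
qed

lemma lead: "okw w \<Longrightarrow> \<exists>c G. c \<noteq> 0 \<and> opw w (delta p) = (\<lambda>M. c * delta (p + exps w) M + G M)
   \<and> (\<forall>M. G M \<noteq> 0 \<longrightarrow> deg M \<le> deg p + int (length w) - 2)"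
proof (induction w)
  case Nil
  show ?case by (intro exI[of _ 1] exI[of _ "\<lambda>M. 0"]) auto
next
  case (Cons g w)
  have okw: "okw w" and g: "gidx g \<in> {1..n}" using Cons.prems by (auto simp: okw_def)
  obtain c G where cG: "c \<noteq> 0" "opw w (delta p) = (\<lambda>M. c * delta (p + exps w) M + G M)"
     "\<forall>M. G M \<noteq> 0 \<longrightarrow> deg M \<le> deg p + int (length w) - 2" using Cons.IH okw by blast
  obtain c' G' where cG': "c' \<noteq> 0" "Top g (delta (p + exps w)) = (\<lambda>M. c' * delta (p + exps w + eps g) M + G' M)"
     "\<forall>M. G' M \<noteq> 0 \<longrightarrow> deg M \<le> deg (p + exps w) - 1" using Top_delta_gen[OF g] by blast
  have TG: "\<forall>M. Top g G M \<noteq> 0 \<longrightarrow> deg M \<le> deg p + int (length w) - 2 + 1"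
    by (rule Top_supp[OF g cG(3)])
  have dp: "deg (p + exps w) = deg p + int (length w)" using deg_add[of p "exps w"] deg_exps[OF okw] by simp
  have e: "p + exps w + eps g = p + exps (g # w)"
    by (simp only: exps_Cons add.assoc add.commute[of "exps w" "eps g"])
  have "opw (g # w) (delta p) = (\<lambda>M. (c * c') * delta (p + exps (g # w)) M + (c * G' M + Top g G M))"
  proof (rule ext)
    fix M
    have t: "Top g (delta (p + exps w)) M = c' * delta (p + exps (g # w)) M + G' M"
      using fun_cong[OF cG'(2), of M] by (simp only: e)
    have "opw (g # w) (delta p) M = Top g (\<lambda>M. c * delta (p + exps w) M + G M) M" using cG(2) by simp
    also have "\<dots> = c * Top g (delta (p + exps w)) M + Top g G M" by (rule Top_lin)
    also have "\<dots> = (c * c') * delta (p + exps (g # w)) M + (c * G' M + Top g G M)"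
      unfolding t by (simp only: distrib_left mult.assoc add.assoc)
    finally show "opw (g # w) (delta p) M = (c * c') * delta (p + exps (g # w)) M + (c * G' M + Top g G M)" .
  qed
  moreover have "\<forall>M. c * G' M + Top g G M \<noteq> 0 \<longrightarrow> deg M \<le> deg p + int (length (g # w)) - 2"
  proof (intro allI impI)
    fix M assume "c * G' M + Top g G M \<noteq> 0"
    then have "G' M \<noteq> 0 \<or> Top g G M \<noteq> 0" by auto
    then show "deg M \<le> deg p + int (length (g # w)) - 2"
    proof
      assume "G' M \<noteq> 0"
      then have "deg M \<le> deg (p + exps w) - 1" using cG'(3) by blast
      then show ?thesis using dp by simp
    next
      assume "Top g G M \<noteq> 0"
      then have "deg M \<le> deg p + int (length w) - 2 + 1" using TG by blast
      then show ?thesis by simp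
    qed
  qed
  moreover have "c * c' \<noteq> 0" using cG(1) cG'(1) by simp
  ultimately show ?case by (intro exI[of _ "c * c'"] exI[of _ "\<lambda>M. c * G' M + Top g G M"]) blast
qed

lemma ncmul_decomp: "finite (supp (a::'k ncpoly)) \<Longrightarrow> ncmul a b = (\<lambda>x. \<Sum>w\<in>supp a. a w * ncmul (ncmono w 1) b x)"
proof -
  assume fa: "finite (supp a)"
  have "ncmul a b = ncmul (\<lambda>x. \<Sum>w\<in>supp a. a w * ncmono w 1 x) b"
    using arg_cong[OF free_decomp[OF fa], of "\<lambda>t. ncmul t b"] by simp
  also have "\<dots> = (\<lambda>x. \<Sum>w\<in>supp a. a w * ncmul (ncmono w 1) b x)"
  proof (rule ext)
    fix x
    have "ncmul (\<lambda>x. \<Sum>w\<in>supp a. a w * ncmono w 1 x) b x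
       = (\<Sum>k\<le>length x. \<Sum>w\<in>supp a. a w * ncmono w 1 (take k x) * b (drop k x))"
      unfolding ncmul_def by (simp only: sum_distrib_right)
    also have "\<dots> = (\<Sum>w\<in>supp a. \<Sum>k\<le>length x. a w * ncmono w 1 (take k x) * b (drop k x))"
      by (rule sum.swap)
    also have "\<dots> = (\<Sum>w\<in>supp a. a w * ncmul (ncmono w 1) b x)"
      unfolding ncmul_def by (simp only: sum_distrib_left mult.assoc)
    finally show "ncmul (\<lambda>x. \<Sum>w\<in>supp a. a w * ncmono w 1 x) b x = (\<Sum>w\<in>supp a. a w * ncmul (ncmono w 1) b x)" .
  qed
  finally show ?thesis .
qed

lemma rho_mul: "finite (supp a) \<Longrightarrow> finite (supp b) \<Longrightarrow> rho (ncmul a b) F M = rho a (rho b F) M"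
proof -
  assume fa: "finite (supp a)" and fb: "finite (supp b)"
  have f: "\<forall>w\<in>supp a. finite (supp (ncmul (ncmono w 1) b))" using rho_lshift(2)[OF fb] fb by simp
  have "rho (ncmul a b) F M = (\<Sum>w\<in>supp a. a w * rho (ncmul (ncmono w 1) b) F M)"
    unfolding ncmul_decomp[OF fa] by (rule rho_lincomb[OF fa f])
  also have "\<dots> = (\<Sum>w\<in>supp a. a w * opw w (rho b F) M)" using rho_lshift(1)[OF fb] by simp
  finally show ?thesis by (simp add: rho_def)
qed

lemma weq_rho: "weq a f \<Longrightarrow> finite (supp a) \<Longrightarrow> finite (supp f) \<Longrightarrow> rho a F M = rho f F M"
  using ideal_kernel[of "ncsub a f"] rho_ncsub[of a f F M] by (simp add: weq_def)

lemma prod_formula: "finite (supp fa) \<Longrightarrow> finite (supp fb) \<Longrightarrow> \<forall>v\<in>supp fb. nice v \<Longrightarrow>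
   rho fa (rho fb (delta 0)) M = (\<Sum>w\<in>supp fa. \<Sum>v\<in>supp fb. fa w * fb v * opw w (delta (exps v)) M)"
proof -
  assume fa: "finite (supp fa)" and fb: "finite (supp fb)" and nb: "\<forall>v\<in>supp fb. nice v"
  have r: "rho fb (delta 0) = (\<lambda>M. \<Sum>v\<in>supp fb. fb v * delta (exps v) M)"
    using nf_nice[OF fb nb] by (simp add: nf_def fun_eq_iff)
  have "rho fa (rho fb (delta 0)) M = (\<Sum>w\<in>supp fa. fa w * opw w (\<lambda>M. \<Sum>v\<in>supp fb. fb v * delta (exps v) M) M)"
    unfolding r rho_def ..
  also have "\<dots> = (\<Sum>w\<in>supp fa. fa w * (\<Sum>v\<in>supp fb. fb v * opw w (delta (exps v)) M))"
    by (simp only: opw_sum)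
  also have "\<dots> = (\<Sum>w\<in>supp fa. \<Sum>v\<in>supp fb. fa w * fb v * opw w (delta (exps v)) M)"
    by (simp only: sum_distrib_left mult.assoc)
  finally show ?thesis .
qed

end


definition lexless :: "(nat \<Rightarrow> int) \<Rightarrow> (nat \<Rightarrow> int) \<Rightarrow> bool" where
  "lexless e e' \<longleftrightarrow> (\<exists>k. e k < e' k \<and> (\<forall>j<k. e j = e' j))"

lemma lex_irrefl: "\<not> lexless e e" by (auto simp: lexless_def)

lemma lex_trans: "lexless a b \<Longrightarrow> lexless b c \<Longrightarrow> lexless a c"
proof -
  assume "lexless a b" "lexless b c"
  then obtain k1 k2 where k1: "a k1 < b k1" "\<forall>j<k1. a j = b j" and k2: "b k2 < c k2" "\<forall>j<k2. b j = c j"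
    by (auto simp: lexless_def)
  consider "k1 < k2" | "k2 < k1" | "k1 = k2" by linarith
  then show ?thesis
  proof cases
    case 1 then show ?thesis using k1 k2 unfolding lexless_def by (intro exI[of _ k1]) auto
  next
    case 2 then show ?thesis using k1 k2 unfolding lexless_def by (intro exI[of _ k2]) auto
  next
    case 3 then show ?thesis using k1 k2 unfolding lexless_def by (intro exI[of _ k1]) auto
  qed
qed

lemma lex_total: "e \<noteq> e' \<Longrightarrow> lexless e e' \<or> lexless e' e"
proof -
  assume "e \<noteq> e'"
  then obtain k0 where "e k0 \<noteq> e' k0" by auto
  define k where "k = (LEAST k. e k \<noteq> e' k)"
  have k: "e k \<noteq> e' k" unfolding k_def by (rule LeastI[of _ k0]) fact
  have lt: "\<forall>j<k. e j = e' j" unfolding k_def using not_less_Least by blast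
  show ?thesis
  proof (cases "e k < e' k")
    case True then show ?thesis using lt unfolding lexless_def by blast
  next
    case False then have "e' k < e k" using k by simp
    then show ?thesis using lt unfolding lexless_def by (metis)
  qed
qed

lemma lex_add: "lexless e e' \<Longrightarrow> lexless (e + h) (e' + h)"
  by (auto simp: lexless_def)

lemma lex_max: "finite S \<Longrightarrow> S \<noteq> {} \<Longrightarrow> \<exists>x\<in>S. \<forall>y\<in>S. y = x \<or> lexless y x"
proof (induction S rule: finite_ne_induct)
  case (singleton x) then show ?case by simp
next
  case (insert x F)
  then obtain m where m: "m \<in> F" "\<forall>y\<in>F. y = m \<or> lexless y m" by blast
  show ?case
  proof (cases "lexless m x")
    case True
    then show ?thesis using m lex_trans by (intro bexI[of _ x]) auto
  next
    case False
    then have "x = m \<or> lexless x m" using lex_total by blast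
    then show ?thesis using m by (intro bexI[of _ m]) auto
  qed
qed

lemma sum_collapse: "finite A \<Longrightarrow> finite P \<Longrightarrow> (\<forall>p\<in>A - P. H p = 0) \<Longrightarrow> (\<forall>p\<in>P - A. H p = 0) \<Longrightarrow> sum H A = sum H P"
proof -
  assume f: "finite A" "finite P" and z: "\<forall>p\<in>A - P. H p = 0" "\<forall>p\<in>P - A. H p = 0"
  have "sum H A = sum H (A \<union> P)" using f z by (intro sum.mono_neutral_left) auto
  also have "\<dots> = sum H P" using f z by (intro sum.mono_neutral_right) auto
  finally show ?thesis .
qed

lemma exps_append: "exps (w @ v) = exps w + exps v"
  by (induction w) (simp_all add: exps_Cons add.assoc)

lemma pos_surj: "\<exists>g. pos g = p"
proof (cases "even p")
  case True then show ?thesis by (intro exI[of _ "Y (p div 2)"]) (auto simp: pos_def)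
next
  case False then show ?thesis by (intro exI[of _ "X (p div 2)"]) (auto simp: pos_def elim: oddE)
qed

lemma exps_eq_iff: "exps w = exps v \<longleftrightarrow> mset w = mset v"
proof
  assume e: "exps w = exps v"
  have "count (mset w) g = count (mset v) g" for g using fun_cong[OF e, of "pos g"]
    by (simp add: exps_count)
  then show "mset w = mset v" by (rule multiset_eqI)
next
  assume m: "mset w = mset v"
  show "exps w = exps v"
  proof (rule ext)
    fix p obtain g where "pos g = p" using pos_surj by blast
    then show "exps w p = exps v p" using m by (metis exps_count)
  qed
qed

lemma mset_pair: "mset [a, b] = mset [c, d] \<longleftrightarrow> (a = c \<and> b = d) \<or> (a = d \<and> b = c)"
  by (auto simp: add_eq_conv_ex)

lemma mset_len: "mset w = mset v \<Longrightarrow> length w = length v"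
  by (metis size_mset)

context qw begin

definition lc :: "gen list \<Rightarrow> (nat \<Rightarrow> int) \<Rightarrow> 'k" where
  "lc w p = (SOME c. \<exists>G. c \<noteq> 0 \<and> opw w (delta p) = (\<lambda>M. c * delta (p + exps w) M + G M)
     \<and> (\<forall>M. G M \<noteq> 0 \<longrightarrow> deg M \<le> deg p + int (length w) - 2))"

lemma lc: "okw w \<Longrightarrow> lc w p \<noteq> 0 \<and> (\<forall>M. deg M \<ge> deg p + int (length w) - 1 \<longrightarrow> opw w (delta p) M = lc w p * delta (p + exps w) M)"
proof -
  assume ok: "okw w"
  from someI_ex[OF lead[OF ok, of p]] obtain G where
    G: "lc w p \<noteq> 0" "opw w (delta p) = (\<lambda>M. lc w p * delta (p + exps w) M + G M)"
       "\<forall>M. G M \<noteq> 0 \<longrightarrow> deg M \<le> deg p + int (length w) - 2"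
    unfolding lc_def by blast
  show ?thesis
  proof (intro conjI allI impI)
    show "lc w p \<noteq> 0" by fact
  next
    fix M assume "deg M \<ge> deg p + int (length w) - 1"
    then have "G M = 0" using G(3) by force
    then show "opw w (delta p) M = lc w p * delta (p + exps w) M" using G(2) by simp
  qed
qed

lemma rho_mono: "rho (ncmono w 1) F M = opw w F M"
proof -
  have "supp (ncmono w (1::'k)) = {w}" by (auto simp: supp_def ncmono_def)
  then show ?thesis by (simp add: rho_def ncmono_def)
qed

lemma fin_mono: "finite (supp (ncmono w (1::'k)))"
proof -
  have "supp (ncmono w (1::'k)) = {w}" by (auto simp: supp_def ncmono_def)
  then show ?thesis by simp
qed

lemma z_rho: "j \<in> {1..n} \<Longrightarrow> rho (weyl_z j) (delta 0) M = (q j - 1) * delta (exps [Y j, X j]) M + delta 0 M"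
  and z_fin: "finite (supp (weyl_z j :: 'k ncpoly))"
proof -
  show "finite (supp (weyl_z j :: 'k ncpoly))"
  proof (cases "j = 0")
    case True then show ?thesis using fin_mono by (simp add: weyl_z_def ncconst_def)
  next
    case False
    have "supp (weyl_z j :: 'k ncpoly) \<subseteq> supp (w2 (X j) (Y j) :: 'k ncpoly) \<union> supp (w2 (Y j) (X j) :: 'k ncpoly)"
      using False supp_ncsub by (simp add: weyl_z_def)
    then show ?thesis using fin_mono by (simp add: w2_def finite_subset)
  qed
next
  assume j: "j \<in> {1..n}"
  have n1: "nice [Y j, X j]" using j by (auto simp: nice_def okw_def rank_def)
  have n2: "nice [X j]" using j by (auto simp: nice_def okw_def rank_def)
  have e1: "opw [Y j, X j] (delta 0) = delta (exps [Y j, X j])" by (rule nice_op[OF n1])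
  have e2: "TX j (delta 0) = delta (exps [X j])" using nice_op[OF n2] by (simp add: Top_def)
  have h1: "rho (weyl_z j) (delta 0) M = opw [X j, Y j] (delta 0) M - opw [Y j, X j] (delta 0) M"
    using j rho_ncsub[OF fin_mono fin_mono] by (simp add: weyl_z_def w2_def rho_mono)
  have h2: "opw [X j, Y j] (delta 0) M = q j * TY j (TX j (delta 0)) M + delta 0 M"
    using R5[of j "delta 0" M] j by (simp add: Top_def)
  have h3: "TY j (TX j (delta 0)) M = delta (exps [Y j, X j]) M"
    using fun_cong[OF e1, of M] by (simp add: Top_def)
  have h4: "opw [Y j, X j] (delta 0) M = delta (exps [Y j, X j]) M" using e1 by simp
  show "rho (weyl_z j) (delta 0) M = (q j - 1) * delta (exps [Y j, X j]) M + delta 0 M"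
    unfolding h1 h2 h3 h4 by (simp add: algebra_simps)
qed

end


locale qwm = qw n q L for n :: nat and q :: "nat \<Rightarrow> 'k::field" and L +
  fixes fa fb :: "'k ncpoly" and \<alpha> :: "nat \<Rightarrow> 'k"
  assumes ffa: "finite (supp fa)" and nfa: "\<forall>w\<in>supp fa. nice w"
    and ffb: "finite (supp fb)" and nfb: "\<forall>w\<in>supp fb. nice w"
    and NF: "\<forall>M. M \<noteq> 0 \<longrightarrow> (\<Sum>w\<in>supp fa. \<Sum>v\<in>supp fb. fa w * fb v * opw w (delta (exps v)) M)
              = (\<Sum>j\<in>{1..n}. \<alpha> j * (q j - 1) * delta (exps [Y j, X j]) M)"
    and nca: "\<exists>w\<in>supp fa. w \<noteq> []" and ncb: "\<exists>w\<in>supp fb. w \<noteq> []"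
begin

definition T :: "(nat \<Rightarrow> int) \<Rightarrow> 'k" where
  "T M = (\<Sum>j\<in>{1..n}. \<alpha> j * (q j - 1) * delta (exps [Y j, X j]) M)"

definition H :: "(nat \<Rightarrow> int) \<Rightarrow> gen list \<times> gen list \<Rightarrow> 'k" where
  "H M p = fa (fst p) * fb (snd p) * (lc (fst p) (exps (snd p)) * delta (exps (snd p) + exps (fst p)) M)"

lemma okwa: "w \<in> supp fa \<Longrightarrow> okw w" using nfa by (auto simp: nice_def)
lemma okwb: "w \<in> supp fb \<Longrightarrow> okw w" using nfb by (auto simp: nice_def)

lemma CF: "M \<noteq> 0 \<Longrightarrow> (\<forall>w\<in>supp fa. \<forall>v\<in>supp fb. deg M \<ge> int (length v) + int (length w) - 1) \<Longrightarrow>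
   T M = sum (H M) (supp fa \<times> supp fb)"
proof -
  assume M: "M \<noteq> 0" and d: "\<forall>w\<in>supp fa. \<forall>v\<in>supp fb. deg M \<ge> int (length v) + int (length w) - 1"
  have "T M = (\<Sum>w\<in>supp fa. \<Sum>v\<in>supp fb. fa w * fb v * opw w (delta (exps v)) M)"
    using NF M by (simp add: T_def)
  also have "\<dots> = (\<Sum>w\<in>supp fa. \<Sum>v\<in>supp fb. H M (w, v))"
  proof (intro sum.cong refl)
    fix w v assume w: "w \<in> supp fa" and v: "v \<in> supp fb"
    have dv: "deg (exps v) = int (length v)" using okwb[OF v] by (rule deg_exps)
    have "opw w (delta (exps v)) M = lc w (exps v) * delta (exps v + exps w) M"
      using lc[OF okwa[OF w], of "exps v"] d w v dv by auto
    then show "fa w * fb v * opw w (delta (exps v)) M = H M (w, v)" by (simp add: H_def)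
  qed
  also have "\<dots> = (\<Sum>(w, v)\<in>supp fa \<times> supp fb. H M (w, v))" by (rule sum.cartesian_product)
  also have "\<dots> = sum (H M) (supp fa \<times> supp fb)" by (simp add: case_prod_unfold)
  finally show ?thesis .
qed

lemma H_out: "p \<notin> supp fa \<times> supp fb \<Longrightarrow> H M p = 0"
  by (cases p) (auto simp: H_def supp_def)

lemma H_mis: "exps (snd p) + exps (fst p) \<noteq> M \<Longrightarrow> H M p = 0"
  by (simp add: H_def delta_def)

lemma lenfa: "w \<in> supp fa \<Longrightarrow> length w \<le> Max (length ` supp fa)" using ffa by simp
lemma lenfb: "w \<in> supp fb \<Longrightarrow> length w \<le> Max (length ` supp fb)" using ffb by simp

lemma T_deg: "deg M \<noteq> 2 \<Longrightarrow> T M = 0"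
proof -
  assume d: "deg M \<noteq> 2"
  have "(delta (exps [Y j, X j]) M :: 'k) = 0" if j: "j \<in> {1..n}" for j
  proof -
    have "deg (exps [Y j, X j]) = 2" using j deg_exps[of "[Y j, X j]"] by (auto simp: okw_def)
    then show ?thesis using d by (auto simp: delta_def)
  qed
  note z = this
  show ?thesis unfolding T_def
  proof (intro sum.neutral ballI)
    fix j assume "j \<in> {1..n}"
    then have "(delta (exps [Y j, X j]) M :: 'k) = 0" by (rule z)
    then show "\<alpha> j * (q j - 1) * delta (exps [Y j, X j]) M = 0" by simp
  qed
qed


lemma lex_add2: "lexless e e' \<Longrightarrow> lexless (h + e) (h + e')"
  using lex_add[of e e' h] by (simp add: add.commute)

lemma top_word:
  assumes ff: "finite (supp f)" and nc: "\<exists>w\<in>supp f. w \<noteq> []" and nf: "\<forall>w\<in>supp f. nice w"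
  shows "\<exists>w0\<in>supp f. length w0 = Max (length ` supp f) \<and> Max (length ` supp f) \<ge> 1 \<and>
     (\<forall>w\<in>supp f. length w = Max (length ` supp f) \<longrightarrow> exps w = exps w0 \<or> lexless (exps w) (exps w0))"
proof -
  let ?d = "Max (length ` supp f)"
  obtain w1 where w1: "w1 \<in> supp f" "w1 \<noteq> []" using nc by blast
  have d1: "?d \<ge> 1" using w1 ff by (metis Max_ge finite_imageI image_eqI le_trans length_greater_0_conv less_one not_le)
  have "?d \<in> length ` supp f" using ff w1 by (intro Max_in) auto
  then have Tne: "{w\<in>supp f. length w = ?d} \<noteq> {}" by auto
  have Tf: "finite (exps ` {w\<in>supp f. length w = ?d})" using ff by simp
  obtain x where x: "x \<in> exps ` {w\<in>supp f. length w = ?d}" "\<forall>y\<in>exps ` {w\<in>supp f. length w = ?d}. y = x \<or> lexless y x"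
    using lex_max[OF Tf] Tne by blast
  then obtain w0 where w0: "w0 \<in> supp f" "length w0 = ?d" "exps w0 = x" by auto
  show ?thesis using w0 x d1 by (intro bexI[of _ w0]) auto
qed

lemma degs: "Max (length ` supp fa) = 1 \<and> Max (length ` supp fb) = 1"
proof -
  let ?da = "Max (length ` supp fa)" and ?db = "Max (length ` supp fb)"
  obtain w0 where w0: "w0 \<in> supp fa" "length w0 = ?da" "?da \<ge> 1"
      "\<forall>w\<in>supp fa. length w = ?da \<longrightarrow> exps w = exps w0 \<or> lexless (exps w) (exps w0)"
    using top_word[OF ffa nca nfa] by blast
  obtain v0 where v0: "v0 \<in> supp fb" "length v0 = ?db" "?db \<ge> 1"
      "\<forall>v\<in>supp fb. length v = ?db \<longrightarrow> exps v = exps v0 \<or> lexless (exps v) (exps v0)"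
    using top_word[OF ffb ncb nfb] by blast
  define M0 where "M0 = exps v0 + exps w0"
  have dM0: "deg M0 = int ?db + int ?da"
    unfolding M0_def using deg_exps okwa[OF w0(1)] okwb[OF v0(1)] w0(2) v0(2) by (simp add: deg_add)
  have M0nz: "M0 \<noteq> 0" using dM0 w0(3) v0(3) by auto
  have key: "w = w0 \<and> v = v0" if w: "w \<in> supp fa" and v: "v \<in> supp fb" and e: "exps v + exps w = M0" for w v
  proof -
    have "deg (exps v + exps w) = int (length v) + int (length w)"
      using deg_exps okwa[OF w] okwb[OF v] by (simp add: deg_add)
    then have "int (length v) + int (length w) = int ?db + int ?da" using e dM0 by simp
    moreover have "length w \<le> ?da" "length v \<le> ?db" using lenfa[OF w] lenfb[OF v] by auto
    ultimately have lw: "length w = ?da" "length v = ?db" by linarith+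
    have ew: "exps w = exps w0"
    proof (rule ccontr)
      assume ne: "exps w \<noteq> exps w0"
      then have l1: "lexless (exps v + exps w) (exps v + exps w0)" using w0(4) w lw lex_add2 by blast
      have "exps v = exps v0 \<or> lexless (exps v) (exps v0)" using v0(4) v lw by blast
      then have "exps v + exps w0 = M0 \<or> lexless (exps v + exps w0) M0"
        unfolding M0_def by (elim disjE) (simp_all add: lex_add)
      then have "lexless (exps v + exps w) M0" using l1 lex_trans by blast
      then show False using e lex_irrefl by simp
    qed
    then have "w = w0" using nice_inj nfa w w0(1) by blast
    moreover have "exps v = exps v0" using e ew unfolding M0_def by simp
    then have "v = v0" using nice_inj nfb v v0(1) by blast
    ultimately show ?thesis by blast
  qed
  have cf: "T M0 = sum (H M0) (supp fa \<times> supp fb)"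
  proof (rule CF[OF M0nz], intro ballI)
    fix w v assume w: "w \<in> supp fa" and v: "v \<in> supp fb"
    show "deg M0 \<ge> int (length v) + int (length w) - 1" using lenfa[OF w] lenfb[OF v] dM0 by linarith
  qed
  also have "\<dots> = sum (H M0) {(w0, v0)}"
  proof (rule sum_collapse)
    show "finite (supp fa \<times> supp fb)" using ffa ffb by simp
  next
    show "\<forall>p\<in>supp fa \<times> supp fb - {(w0, v0)}. H M0 p = 0"
    proof
      fix p assume p: "p \<in> supp fa \<times> supp fb - {(w0, v0)}"
      show "H M0 p = 0"
      proof (rule H_mis, rule notI)
        assume "exps (snd p) + exps (fst p) = M0"
        then have "fst p = w0 \<and> snd p = v0" using key p by (cases p) auto
        then show False using p by (cases p) auto
      qed
    qed
  qed (use w0 v0 in auto)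
  also have "\<dots> = fa w0 * fb v0 * lc w0 (exps v0)" by (simp add: H_def M0_def delta_def)
  finally have "T M0 \<noteq> 0" using w0(1) v0(1) lc[OF okwa[OF w0(1)], of "exps v0"] by (simp add: supp_def)
  then have "deg M0 = 2" using T_deg by blast
  then show ?thesis using dM0 w0(3) v0(3) by linarith
qed

end


lemma len1_cases: "length w \<le> 1 \<Longrightarrow> w = [] \<or> (\<exists>x. w = [x])"
  by (cases w) auto

lemma exps_single: "exps [g] = eps g" by (simp add: exps_Cons)
lemma exps_pair: "exps [g, h] = eps g + eps h" by (simp add: exps_Cons)

context qwm begin

lemma len1a: "w \<in> supp fa \<Longrightarrow> length w \<le> 1" using lenfa degs by force
lemma len1b: "w \<in> supp fb \<Longrightarrow> length w \<le> 1" using lenfb degs by force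

lemma CF1: "M \<noteq> 0 \<Longrightarrow> deg M \<ge> 1 \<Longrightarrow> T M = sum (H M) (supp fa \<times> supp fb)"
proof (rule CF, assumption, intro ballI)
  fix w v assume "deg M \<ge> 1" "w \<in> supp fa" "v \<in> supp fb"
  then show "deg M \<ge> int (length v) + int (length w) - 1" using len1a len1b by fastforce
qed

lemma pair_shape: "p \<in> supp fa \<times> supp fb \<Longrightarrow> exps (snd p) + exps (fst p) = exps [g, h] \<Longrightarrow>
   p = ([h], [g]) \<or> p = ([g], [h])"
proof -
  assume p: "p \<in> supp fa \<times> supp fb" and e: "exps (snd p) + exps (fst p) = exps [g, h]"
  obtain w v where pv: "p = (w, v)" by (cases p)
  have m: "mset (v @ w) = mset [g, h]" using e pv by (simp add: exps_append[symmetric] exps_eq_iff)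
  have l: "length w \<le> 1" "length v \<le> 1" using p pv len1a len1b by auto
  have "length (v @ w) = 2" using mset_len[OF m] by simp
  then have "length v = 1" "length w = 1" using l by auto
  then obtain x y where "w = [x]" "v = [y]" by (metis One_nat_def length_0_conv length_Suc_conv)
  then show ?thesis using m pv mset_pair[of y x g h] by auto
qed

lemma coef2: "okw [g] \<Longrightarrow> okw [h] \<Longrightarrow>
   T (exps [g, h]) = fa [h] * fb [g] * lc [h] (exps [g]) + (if g \<noteq> h then fa [g] * fb [h] * lc [g] (exps [h]) else 0)"
proof -
  assume g: "okw [g]" and h: "okw [h]"
  let ?M = "exps [g, h]"
  have d: "deg ?M = 2" using deg_exps[of "[g,h]"] g h by (auto simp: okw_def)
  then have Mnz: "?M \<noteq> 0" by auto
  have "T ?M = sum (H ?M) (supp fa \<times> supp fb)" using CF1[OF Mnz] d by simp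
  also have "\<dots> = sum (H ?M) {([h], [g]), ([g], [h])}"
  proof (rule sum_collapse)
    show "finite (supp fa \<times> supp fb)" using ffa ffb by simp
  next
    show "\<forall>p\<in>supp fa \<times> supp fb - {([h], [g]), ([g], [h])}. H ?M p = 0"
      using pair_shape H_mis by blast
  next
    show "\<forall>p\<in>{([h], [g]), ([g], [h])} - supp fa \<times> supp fb. H ?M p = 0"
      using H_out by blast
  qed simp
  also have "\<dots> = fa [h] * fb [g] * lc [h] (exps [g]) + (if g \<noteq> h then fa [g] * fb [h] * lc [g] (exps [h]) else 0)"
  proof -
    have e1: "exps [g] + exps [h] = ?M" by (simp add: exps_Cons)
    have e2: "exps [h] + exps [g] = ?M" by (simp add: exps_Cons add.commute)
    have H1: "H ?M ([h], [g]) = fa [h] * fb [g] * lc [h] (exps [g])"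
      unfolding H_def using e1 by (simp add: delta_def)
    have H2: "H ?M ([g], [h]) = fa [g] * fb [h] * lc [g] (exps [h])"
      unfolding H_def using e2 by (simp add: delta_def)
    show ?thesis
    proof (cases "g = h")
      case True then show ?thesis using H1 by simp
    next
      case False then show ?thesis using H1 H2 by simp
    qed
  qed
  finally show ?thesis .
qed

lemma single_shape: "p \<in> supp fa \<times> supp fb \<Longrightarrow> exps (snd p) + exps (fst p) = exps [g] \<Longrightarrow>
   p = ([], [g]) \<or> p = ([g], [])"
proof -
  assume p: "p \<in> supp fa \<times> supp fb" and e: "exps (snd p) + exps (fst p) = exps [g]"
  obtain w v where pv: "p = (w, v)" by (cases p)
  have m: "mset (v @ w) = mset [g]" using e pv by (simp add: exps_append[symmetric] exps_eq_iff)
  have "length (v @ w) = 1" using mset_len[OF m] by simp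
  then have "(v = [] \<and> length w = 1) \<or> (w = [] \<and> length v = 1)" by (cases v) auto
  then show ?thesis
  proof
    assume "v = [] \<and> length w = 1"
    then obtain x where "v = []" "w = [x]" by (metis One_nat_def length_0_conv length_Suc_conv)
    then show ?thesis using m pv by simp
  next
    assume "w = [] \<and> length v = 1"
    then obtain x where "w = []" "v = [x]" by (metis One_nat_def length_0_conv length_Suc_conv)
    then show ?thesis using m pv by simp
  qed
qed

lemma coef1: "okw [g] \<Longrightarrow> T (exps [g]) = fa [] * fb [g] * lc [] (exps [g]) + fa [g] * fb [] * lc [g] (exps [])"
proof -
  assume g: "okw [g]"
  let ?M = "exps [g]"
  have d: "deg ?M = 1" using deg_exps[OF g] by simp
  then have Mnz: "?M \<noteq> 0" by auto
  have "T ?M = sum (H ?M) (supp fa \<times> supp fb)" using CF1[OF Mnz] d by simp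
  also have "\<dots> = sum (H ?M) {([], [g]), ([g], [])}"
  proof (rule sum_collapse)
    show "finite (supp fa \<times> supp fb)" using ffa ffb by simp
  next
    show "\<forall>p\<in>supp fa \<times> supp fb - {([], [g]), ([g], [])}. H ?M p = 0"
      using single_shape H_mis by blast
  next
    show "\<forall>p\<in>{([], [g]), ([g], [])} - supp fa \<times> supp fb. H ?M p = 0"
      using H_out by blast
  qed simp
  also have "\<dots> = fa [] * fb [g] * lc [] (exps [g]) + fa [g] * fb [] * lc [g] (exps [])"
    by (simp add: H_def delta_def)
  finally show ?thesis .
qed

lemma T_ne: "(\<forall>j\<in>{1..n}. mset w \<noteq> mset [Y j, X j]) \<Longrightarrow> T (exps w) = 0"
proof -
  assume ne: "\<forall>j\<in>{1..n}. mset w \<noteq> mset [Y j, X j]"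
  show ?thesis unfolding T_def
  proof (intro sum.neutral ballI)
    fix j assume "j \<in> {1..n}"
    then have "exps w \<noteq> exps [Y j, X j]" using ne exps_eq_iff by blast
    then have "(delta (exps [Y j, X j]) (exps w) :: 'k) = 0" by (simp add: delta_def)
    then show "\<alpha> j * (q j - 1) * delta (exps [Y j, X j]) (exps w) = 0" by simp
  qed
qed

lemma T_ii: "i \<in> {1..n} \<Longrightarrow> T (exps [Y i, X i]) = \<alpha> i * (q i - 1)"
proof -
  assume i: "i \<in> {1..n}"
  have "T (exps [Y i, X i]) = (\<Sum>j\<in>{1..n}. if j = i then \<alpha> j * (q j - 1) else 0)"
    unfolding T_def
  proof (intro sum.cong refl)
    fix j
    have "(exps [Y i, X i] = exps [Y j, X j]) = (j = i)" by (simp only: exps_eq_iff mset_pair) auto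
    then show "\<alpha> j * (q j - 1) * delta (exps [Y j, X j]) (exps [Y i, X i]) = (if j = i then \<alpha> j * (q j - 1) else 0)"
      by (auto simp: delta_def)
  qed
  also have "\<dots> = \<alpha> i * (q i - 1)" using i by simp
  finally show ?thesis .
qed

lemma shape: "finite (supp (f::'k ncpoly)) \<Longrightarrow> (\<forall>w\<in>supp f. okw w \<and> length w \<le> 1) \<Longrightarrow> f [] = 0 \<Longrightarrow>
   (\<forall>x. okw [x] \<longrightarrow> x \<noteq> u \<longrightarrow> f [x] = 0) \<Longrightarrow> f = ncsmult (f [u]) (ncgen u)"
proof (rule ext)
  fix y assume h: "\<forall>w\<in>supp f. okw w \<and> length w \<le> 1" "f [] = 0" "\<forall>x. okw [x] \<longrightarrow> x \<noteq> u \<longrightarrow> f [x] = 0"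
  show "f y = ncsmult (f [u]) (ncgen u) y"
  proof (cases "y = [u]")
    case True then show ?thesis by (simp add: ncsmult_def ncgen_def ncmono_def)
  next
    case False
    have "f y = 0"
    proof (rule ccontr)
      assume nz: "f y \<noteq> 0"
      then have y: "okw y" "length y \<le> 1" using h(1) by (auto simp: supp_def)
      then have "y = [] \<or> (\<exists>x. y = [x])" using len1_cases by blast
      then show False using nz h(2,3) y False by auto
    qed
    then show ?thesis using False by (simp add: ncsmult_def ncgen_def ncmono_def)
  qed
qed


lemma result:
  assumes i: "i \<in> {1..n}" and ai: "\<alpha> i \<noteq> 0"
  shows "\<exists>c d. c \<noteq> 0 \<and> d \<noteq> 0 \<and> ((fa = ncsmult c (ncgen (Y i)) \<and> fb = ncsmult d (ncgen (X i)))
          \<or> (fa = ncsmult c (ncgen (X i)) \<and> fb = ncsmult d (ncgen (Y i))))"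
proof -
  have okY: "okw [Y i]" and okX: "okw [X i]" and ok0: "okw []" using i by (auto simp: okw_def)
  have lcnz: "\<And>w p. okw w \<Longrightarrow> lc w p \<noteq> 0" using lc by blast
  have qi: "q i - 1 \<noteq> 0" using q_ne1 i by auto
  have sa: "\<forall>w\<in>supp fa. okw w \<and> length w \<le> 1" using okwa len1a by blast
  have sb: "\<forall>w\<in>supp fb. okw w \<and> length w \<le> 1" using okwb len1b by blast
  have "T (exps [Y i, X i]) \<noteq> 0" using T_ii[OF i] ai qi by simp
  then have main: "fa [X i] * fb [Y i] \<noteq> 0 \<or> fa [Y i] * fb [X i] \<noteq> 0"
    using coef2[OF okY okX] by auto
  have zYY: "fa [Y i] * fb [Y i] = 0"
  proof -
    have "T (exps [Y i, Y i]) = 0" by (rule T_ne) (simp only: mset_pair, auto)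
    then show ?thesis using coef2[OF okY okY] lcnz[OF okY] by simp
  qed
  have zXX: "fa [X i] * fb [X i] = 0"
  proof -
    have "T (exps [X i, X i]) = 0" by (rule T_ne) (simp only: mset_pair, auto)
    then show ?thesis using coef2[OF okX okX] lcnz[OF okX] by simp
  qed
  have zYx: "fa [Y i] * fb [x] * lc [Y i] (exps [x]) + fa [x] * fb [Y i] * lc [x] (exps [Y i]) = 0"
    if x: "okw [x]" "x \<noteq> Y i" "x \<noteq> X i" for x
  proof -
    have "T (exps [x, Y i]) = 0" by (rule T_ne) (use x in \<open>simp only: mset_pair, auto\<close>)
    then show ?thesis using coef2[OF x(1) okY] x by (simp add: add.commute)
  qed
  have zXx: "fa [x] * fb [X i] * lc [x] (exps [X i]) + fa [X i] * fb [x] * lc [X i] (exps [x]) = 0"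
    if x: "okw [x]" "x \<noteq> Y i" "x \<noteq> X i" for x
  proof -
    have "T (exps [X i, x]) = 0" by (rule T_ne) (use x in \<open>simp only: mset_pair, auto\<close>)
    then show ?thesis using coef2[OF okX x(1)] x by (simp add: add.commute)
  qed
  have z1: "fa [] * fb [g] * lc [] (exps [g]) + fa [g] * fb [] * lc [g] (exps []) = 0" if g: "okw [g]" for g
  proof -
    have "T (exps [g]) = 0" by (rule T_ne) (auto dest: mset_len)
    then show ?thesis using coef1[OF g] by simp
  qed
  from main show ?thesis
  proof
    assume h: "fa [X i] * fb [Y i] \<noteq> 0"
    then have h1: "fa [X i] \<noteq> 0" "fb [Y i] \<noteq> 0" by auto
    have a1: "fa [Y i] = 0" using zYY h1 by simp
    have b1: "fb [X i] = 0" using zXX h1 by simp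
    have a2: "\<forall>x. okw [x] \<longrightarrow> x \<noteq> X i \<longrightarrow> fa [x] = 0"
    proof (intro allI impI)
      fix x assume x: "okw [x]" "x \<noteq> X i"
      show "fa [x] = 0"
      proof (cases "x = Y i")
        case True then show ?thesis using a1 by simp
      next
        case False then show ?thesis using zYx[OF x(1) False x(2)] a1 h1 lcnz[OF x(1)] by simp
      qed
    qed
    have b2: "\<forall>x. okw [x] \<longrightarrow> x \<noteq> Y i \<longrightarrow> fb [x] = 0"
    proof (intro allI impI)
      fix x assume x: "okw [x]" "x \<noteq> Y i"
      show "fb [x] = 0"
      proof (cases "x = X i")
        case True then show ?thesis using b1 by simp
      next
        case False then show ?thesis using zXx[OF x(1) x(2) False] b1 h1 lcnz[OF okX] by simp
      qed
    qed
    have a0: "fa [] = 0" using z1[OF okY] h1 a1 lcnz[OF ok0] by simp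
    have b0: "fb [] = 0" using z1[OF okX] h1 b1 lcnz[OF okX] by simp
    have "fa = ncsmult (fa [X i]) (ncgen (X i))" by (rule shape[OF ffa sa a0 a2])
    moreover have "fb = ncsmult (fb [Y i]) (ncgen (Y i))" by (rule shape[OF ffb sb b0 b2])
    ultimately show ?thesis using h1 by blast
  next
    assume h: "fa [Y i] * fb [X i] \<noteq> 0"
    then have h1: "fa [Y i] \<noteq> 0" "fb [X i] \<noteq> 0" by auto
    have a1: "fa [X i] = 0" using zXX h1 by simp
    have b1: "fb [Y i] = 0" using zYY h1 by simp
    have a2: "\<forall>x. okw [x] \<longrightarrow> x \<noteq> Y i \<longrightarrow> fa [x] = 0"
    proof (intro allI impI)
      fix x assume x: "okw [x]" "x \<noteq> Y i"
      show "fa [x] = 0"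
      proof (cases "x = X i")
        case True then show ?thesis using a1 by simp
      next
        case False then show ?thesis using zXx[OF x(1) x(2) False] a1 h1 lcnz[OF x(1)] by simp
      qed
    qed
    have b2: "\<forall>x. okw [x] \<longrightarrow> x \<noteq> X i \<longrightarrow> fb [x] = 0"
    proof (intro allI impI)
      fix x assume x: "okw [x]" "x \<noteq> X i"
      show "fb [x] = 0"
      proof (cases "x = Y i")
        case True then show ?thesis using b1 by simp
      next
        case False then show ?thesis using zYx[OF x(1) False x(2)] b1 h1 lcnz[OF okY] by simp
      qed
    qed
    have b0: "fb [] = 0" using z1[OF okY] h1 b1 lcnz[OF okY] by simp
    have a0: "fa [] = 0" using z1[OF okX] h1 a1 lcnz[OF ok0] by simp
    have "fa = ncsmult (fa [Y i]) (ncgen (Y i))" by (rule shape[OF ffa sa a0 a2])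
    moreover have "fb = ncsmult (fb [X i]) (ncgen (X i))" by (rule shape[OF ffb sb b0 b2])
    ultimately show ?thesis using h1 by blast
  qed
qed

end


context qw begin

lemma supp_lincomb_fin: "finite J \<Longrightarrow> \<forall>j\<in>J. finite (supp (h j)) \<Longrightarrow> finite (supp (\<lambda>x. \<Sum>j\<in>J. (c j :: 'k) * h j x))"
proof -
  assume J: "finite J" "\<forall>j\<in>J. finite (supp (h j))"
  have ss: "supp (\<lambda>x. \<Sum>j\<in>J. c j * h j x) \<subseteq> (\<Union>j\<in>J. supp (h j))"
  proof
    fix x assume "x \<in> supp (\<lambda>x. \<Sum>j\<in>J. c j * h j x)"
    then obtain j where "j \<in> J" "c j * h j x \<noteq> 0" unfolding supp_def
      using sum.not_neutral_contains_not_neutral by (smt (verit) mem_Collect_eq)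
    then show "x \<in> (\<Union>j\<in>J. supp (h j))" by (auto simp: supp_def)
  qed
  show ?thesis using ss J by (meson finite_UN_I finite_subset)
qed

lemma fin_ncmul: "finite (supp a) \<Longrightarrow> finite (supp b) \<Longrightarrow> finite (supp (ncmul a (b::'k ncpoly)))"
proof -
  assume fa: "finite (supp a)" and fb: "finite (supp b)"
  have f: "\<forall>w\<in>supp a. finite (supp (ncmul (ncmono w 1) b))" using rho_lshift(2)[OF fb] fb by simp
  show ?thesis unfolding ncmul_decomp[OF fa] by (rule supp_lincomb_fin[OF fa f])
qed

lemma NF_main:
  assumes fa0: "finite (supp a)" and fb0: "finite (supp b)"
    and fa: "finite (supp fa)" "\<forall>w\<in>supp fa. nice w" "weq a fa"
    and fb: "finite (supp fb)" "\<forall>w\<in>supp fb. nice w" "weq b fb"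
    and ab: "weq (ncmul a b) (\<lambda>u. \<Sum>j=0..n. \<alpha> j * weyl_z j u)"
  shows "\<forall>M. M \<noteq> 0 \<longrightarrow> (\<Sum>w\<in>supp fa. \<Sum>v\<in>supp fb. fa w * fb v * opw w (delta (exps v)) M)
              = (\<Sum>j\<in>{1..n}. \<alpha> j * (q j - 1) * delta (exps [Y j, X j]) M)"
proof (intro allI impI)
  fix M :: "nat \<Rightarrow> int" assume M: "M \<noteq> 0"
  let ?G = "\<lambda>u. \<Sum>j=0..n. \<alpha> j * weyl_z j u"
  have zf: "\<forall>j\<in>{0..n}. finite (supp (weyl_z j :: 'k ncpoly))" using z_fin by blast
  have fG: "finite (supp ?G)" by (rule supp_lincomb_fin) (use zf in auto)
  have fab: "finite (supp (ncmul a b))" using fin_ncmul fa0 fb0 by blast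
  have rb: "rho b (delta 0) = rho fb (delta 0)" using weq_rho[OF fb(3) fb0 fb(1)] by (simp add: fun_eq_iff)
  have "rho (ncmul a b) (delta 0) M = rho a (rho b (delta 0)) M" by (rule rho_mul[OF fa0 fb0])
  also have "\<dots> = rho fa (rho fb (delta 0)) M" unfolding rb by (rule weq_rho[OF fa(3) fa0 fa(1)])
  also have "\<dots> = (\<Sum>w\<in>supp fa. \<Sum>v\<in>supp fb. fa w * fb v * opw w (delta (exps v)) M)"
    by (rule prod_formula[OF fa(1) fb(1) fb(2)])
  finally have L: "rho (ncmul a b) (delta 0) M = (\<Sum>w\<in>supp fa. \<Sum>v\<in>supp fb. fa w * fb v * opw w (delta (exps v)) M)" .
  have X: "rho (ncmul a b) (delta 0) M = rho ?G (delta 0) M" by (rule weq_rho[OF ab fab fG])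
  have Y: "rho ?G (delta 0) M = (\<Sum>j\<in>{0..n}. \<alpha> j * rho (weyl_z j) (delta 0) M)" by (rule rho_lincomb) (use zf in auto)
  have ins: "{0..n} = insert 0 {1..n}" by auto
  have Z: "(\<Sum>j\<in>{0..n}. \<alpha> j * rho (weyl_z j) (delta 0) M) = \<alpha> 0 * rho (weyl_z 0) (delta 0) M + (\<Sum>j\<in>{1..n}. \<alpha> j * rho (weyl_z j) (delta 0) M)"
    unfolding ins by (rule sum.insert) auto
  have d0: "(delta 0 M :: 'k) = 0" using M by (simp add: delta_def)
  have W0: "rho (weyl_z 0) (delta 0) M = delta 0 M"
  proof -
    have "weyl_z 0 = (ncmono [] 1 :: 'k ncpoly)" by (simp add: weyl_z_def ncconst_def)
    then show ?thesis using rho_mono[of "[]" "delta 0" M] by simp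
  qed
  have S: "(\<Sum>j\<in>{1..n}. \<alpha> j * rho (weyl_z j) (delta 0) M) = (\<Sum>j\<in>{1..n}. \<alpha> j * (q j - 1) * delta (exps [Y j, X j]) M)"
  proof (intro sum.cong refl)
    fix j assume j: "j \<in> {1..n}"
    have "rho (weyl_z j) (delta 0) M = (q j - 1) * delta (exps [Y j, X j]) M + delta 0 M" by (rule z_rho[OF j])
    then show "\<alpha> j * rho (weyl_z j) (delta 0) M = \<alpha> j * (q j - 1) * delta (exps [Y j, X j]) M"
      unfolding d0 by simp
  qed
  show "(\<Sum>w\<in>supp fa. \<Sum>v\<in>supp fb. fa w * fb v * opw w (delta (exps v)) M)
              = (\<Sum>j\<in>{1..n}. \<alpha> j * (q j - 1) * delta (exps [Y j, X j]) M)"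
    unfolding L[symmetric] X Y Z W0 d0 S by simp
qed

lemma nonconst:
  assumes "finite (supp f)" "weq a f" "\<forall>c. \<not> weq a (ncconst c)"
  shows "\<exists>w\<in>supp f. w \<noteq> []"
proof (rule ccontr)
  assume h: "\<not> (\<exists>w\<in>supp f. w \<noteq> [])"
  have "f = ncconst (f [])"
  proof (rule ext)
    fix x show "f x = ncconst (f []) x"
    proof (cases "x = []")
      case True then show ?thesis by (simp add: ncconst_def ncmono_def)
    next
      case False
      then have "f x = 0" using h by (auto simp: supp_def)
      then show ?thesis using False by (simp add: ncconst_def ncmono_def)
    qed
  qed
  then show False using assms(2,3) by metis
qed
end



theorem lemma2p1:
  fixes n i :: nat and q :: "nat \<Rightarrow> 'k::field" and L :: "nat \<Rightarrow> nat \<Rightarrow> 'k"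
    and a b :: "'k ncpoly" and \<alpha> :: "nat \<Rightarrow> 'k"
  assumes n: "n \<ge> 1"
    and q_nz: "\<forall>k\<in>{1..n}. q k \<noteq> 0"
    and q_nroot: "\<forall>k\<in>{1..n}. \<forall>m::nat. m > 0 \<longrightarrow> q k ^ m \<noteq> 1"
    and L_nz: "\<forall>k\<in>{1..n}. \<forall>l\<in>{1..n}. L k l \<noteq> 0"
    and L_inv: "\<forall>k\<in>{1..n}. \<forall>l\<in>{1..n}. L k l = inverse (L l k)"
    and L_diag: "\<forall>k\<in>{1..n}. L k k = 1"
    and i: "i \<in> {1..n}"
    and a: "free_elem n a" and b: "free_elem n b"
    and aK: "\<not> weyl_in_K n q L a" and bK: "\<not> weyl_in_K n q L b"
    and ab: "weyl_eq n q L (ncmul a b) (\<lambda>u. \<Sum>j=0..n. \<alpha> j * weyl_z j u)"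
    and \<alpha>i: "\<alpha> i \<noteq> 0"
  shows "\<exists>c d. c \<noteq> 0 \<and> d \<noteq> 0 \<and>
           ((weyl_eq n q L a (ncsmult c (ncgen (Y i))) \<and> weyl_eq n q L b (ncsmult d (ncgen (X i))))
          \<or> (weyl_eq n q L a (ncsmult c (ncgen (X i))) \<and> weyl_eq n q L b (ncsmult d (ncgen (Y i)))))"
proof -
  have q1: "\<forall>k\<in>{1..n}. q k \<noteq> 1" using q_nroot by (metis power_one_right zero_less_one)
  have Li: "\<forall>k\<in>{1..n}. \<forall>l\<in>{1..n}. L k l * L l k = 1"
  proof (intro ballI)
    fix k l assume k: "k \<in> {1..n}" and l: "l \<in> {1..n}"
    have e: "L k l = inverse (L l k)" using L_inv k l by blast
    have "L l k \<noteq> 0" using L_nz k l by blast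
    then show "L k l * L l k = 1" unfolding e by (rule left_inverse)
  qed
  interpret qw n q L using q_nz q1 L_nz Li by unfold_locales
  have we: "weyl_eq n q L = weq" by (simp add: weyl_eq_def weq_def fun_eq_iff)
  have fa0: "finite (supp a)" "\<forall>w\<in>supp a. okw w" using a by (auto simp: free_elem_def supp_def okw_def)
  have fb0: "finite (supp b)" "\<forall>w\<in>supp b. okw w" using b by (auto simp: free_elem_def supp_def okw_def)
  obtain fa where fa: "finite (supp fa)" "\<forall>w\<in>supp fa. nice w" "weq a fa" using span_elem[OF fa0] by blast
  obtain fb where fb: "finite (supp fb)" "\<forall>w\<in>supp fb. nice w" "weq b fb" using span_elem[OF fb0] by blast
  have aK': "\<forall>c. \<not> weq a (ncconst c)" using aK by (simp add: weyl_in_K_def we)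
  have bK': "\<forall>c. \<not> weq b (ncconst c)" using bK by (simp add: weyl_in_K_def we)
  have ab': "weq (ncmul a b) (\<lambda>u. \<Sum>j=0..n. \<alpha> j * weyl_z j u)" using ab by (simp add: we)
  interpret qwm n q L fa fb \<alpha>
  proof unfold_locales
    show "\<forall>M. M \<noteq> 0 \<longrightarrow> (\<Sum>w\<in>supp fa. \<Sum>v\<in>supp fb. fa w * fb v * opw w (delta (exps v)) M)
              = (\<Sum>j\<in>{1..n}. \<alpha> j * (q j - 1) * delta (exps [Y j, X j]) M)"
      by (rule NF_main[OF fa0(1) fb0(1) fa fb ab'])
    show "\<exists>w\<in>supp fa. w \<noteq> []" by (rule nonconst[OF fa(1) fa(3) aK'])
    show "\<exists>w\<in>supp fb. w \<noteq> []" by (rule nonconst[OF fb(1) fb(3) bK'])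
  qed (use fa fb in auto)
  obtain c d where cd: "c \<noteq> 0" "d \<noteq> 0" "(fa = ncsmult c (ncgen (Y i)) \<and> fb = ncsmult d (ncgen (X i)))
          \<or> (fa = ncsmult c (ncgen (X i)) \<and> fb = ncsmult d (ncgen (Y i)))"
    using result[OF i \<alpha>i] by blast
  show ?thesis unfolding we using cd fa(3) fb(3) by blast
qed



end
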